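(* Let $(\{\mathcal M_{A_i}\}_{i=1}^m,\tau)$ be an MCvNA model of a network $\Xi(n,m)$ with maximal independence number $h_{\max}$ (so $\tau$ is a network state), let $2\le h\le h_{\max}$ and $R=\{r_1,\dots,r_h\}\in\Gamma(n,m,h^{D_h})$. If the von Neumann algebras $\mathcal M_{A_{r_1}},\dots,\mathcal M_{A_{r_h}}$ are all abelian, then for all observables $A_{i,0},A_{i,1}\in\mathcal M_{A_i}$, $i=1,\dots,m$, $$|I_\tau|^{1/h}+|J_\tau|^{1/h}\le 2 .$$
   Context: A network $\Xi(n,m)$ consists of $m$ parties $\mathbf A_1,\dots,\mathbf A_m$ and $n$ sources, each source being distributed to some subset of the parties. A set of parties is called independent if no two of its members receive a common source. For an integer $h$, $\Gamma(n,m,h^{D_h})$ denotes the family (of cardinality $D_h$) of all index sets $\{r_1,\dots,r_h\}\subset\{1,\dots,m\}$ such that $\mathbf A_{r_1},\dots,\mathbf A_{r_h}$ are independent; $h_{\max}$ is the largest $h$ for which this family is nonempty, and one always takes $2\le h\le h_{\max}$. MCvNA model of the network: von Neumann algebras $\mathcal M_{A_1},\dots,\mathcal M_{A_m}\subset\mathcal B(H)$ on a common Hilbert space $H$ which mutually commute ($\mathcal M_{A_i}\subset\mathcal M_{A_j}'$ for $i\neq j$), together with a state $\tau$ on $\mathcal M_{A_1A_2\cdots A_m}:=(\mathcal M_{A_1}\vee\cdots\vee\mathcal M_{A_m})''$, called a network state, such that for every $h$ with $2\le h\le h_{\max}$ and every $\{r_1,\dots,r_h\}\in\Gamma(n,m,h^{D_h})$,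 $\tau(A_{r_1}\cdots A_{r_h})=\tau(A_{r_1})\cdots\tau(A_{r_h})$ for all $A_{r_k}\in\mathcal M_{A_{r_k}}$. Observables: for each party $i$, $A_{i,0},A_{i,1}$ are self-adjoint elements of $\mathcal M_{A_i}$ with $-I\le A_{i,x}\le I$. With $R^c=\{1,\dots,m\}\setminus R$: $$I_\tau=\tau\Big(\prod_{i\in R}(A_{i,0}+A_{i,1})\prod_{j\in R^c}A_{j,0}\Big),\qquad J_\tau=\tau\Big(\prod_{i\in R}(A_{i,0}-A_{i,1})\prod_{j\in R^c}A_{j,1}\Big).$$ *)

theory Defs
  imports Complex_Main
begin

text \<open>Complex inner product space; inner product linear in the second argument
 and conjugate-linear in the first (physics convention).\<close>
class complex_inner_space = ab_group_add +
  fixes scaleC :: "complex \<Rightarrow> 'a \<Rightarrow> 'a"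
    and cinner :: "'a \<Rightarrow> 'a \<Rightarrow> complex"
  assumes scaleC_add_right: "scaleC a (x + y) = scaleC a x + scaleC a y"
    and scaleC_add_left: "scaleC (a + b) x = scaleC a x + scaleC b x"
    and scaleC_scaleC: "scaleC a (scaleC b x) = scaleC (a * b) x"
    and scaleC_one: "scaleC 1 x = x"
    and cinner_commute: "cinner x y = cnj (cinner y x)"
    and cinner_add_right: "cinner x (y + z) = cinner x y + cinner x z"
    and cinner_scaleC_right: "cinner x (scaleC a y) = a * cinner x y"
    and cinner_self_nonneg: "Im (cinner x x) = 0 \<and> 0 \<le> Re (cinner x x)"
    and cinner_self_zero: "cinner x x = 0 \<Longrightarrow> x = 0"

definition cnorm :: "'a::complex_inner_space \<Rightarrow> real" where
  "cnorm x = sqrt (Re (cinner x x))"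

class complex_hilbert_space = complex_inner_space +
  assumes cauchy_complete:
    "(\<forall>e>0. \<exists>N::nat. \<forall>p\<ge>N. \<forall>q\<ge>N. sqrt (Re (cinner (X p - X q) (X p - X q))) < e)
       \<Longrightarrow> (\<exists>L. \<forall>e>0. \<exists>N::nat. \<forall>p\<ge>N. sqrt (Re (cinner (X p - L) (X p - L))) < e)"

definition bounded_op :: "('h::complex_hilbert_space \<Rightarrow> 'h) \<Rightarrow> bool" where
  "bounded_op T \<longleftrightarrow>
     (\<forall>x y. T (x + y) = T x + T y) \<and> (\<forall>c x. T (scaleC c x) = scaleC c (T x)) \<and>
     (\<exists>K. \<forall>x. cnorm (T x) \<le> K * cnorm x)"

definition BH :: "('h::complex_hilbert_space \<Rightarrow> 'h) set" where
  "BH = {T. bounded_op T}"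

definition adj :: "('h::complex_hilbert_space \<Rightarrow> 'h) \<Rightarrow> ('h \<Rightarrow> 'h)" where
  "adj T = (SOME S. bounded_op S \<and> (\<forall>x y. cinner (T x) y = cinner x (S y)))"

definition op_add :: "('h::complex_hilbert_space \<Rightarrow> 'h) \<Rightarrow> ('h \<Rightarrow> 'h) \<Rightarrow> ('h \<Rightarrow> 'h)" where
  "op_add S T = (\<lambda>x. S x + T x)"

definition op_diff :: "('h::complex_hilbert_space \<Rightarrow> 'h) \<Rightarrow> ('h \<Rightarrow> 'h) \<Rightarrow> ('h \<Rightarrow> 'h)" where
  "op_diff S T = (\<lambda>x. S x - T x)"

definition op_scale :: "complex \<Rightarrow> ('h::complex_hilbert_space \<Rightarrow> 'h) \<Rightarrow> ('h \<Rightarrow> 'h)" where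
  "op_scale c T = (\<lambda>x. scaleC c (T x))"

definition commutant :: "('h::complex_hilbert_space \<Rightarrow> 'h) set \<Rightarrow> ('h \<Rightarrow> 'h) set" where
  "commutant M = {T \<in> BH. \<forall>S\<in>M. T \<circ> S = S \<circ> T}"

definition von_neumann_algebra :: "('h::complex_hilbert_space \<Rightarrow> 'h) set \<Rightarrow> bool" where
  "von_neumann_algebra M \<longleftrightarrow>
     M \<subseteq> BH \<and> (\<forall>T\<in>M. adj T \<in> M) \<and> commutant (commutant M) = M"

definition abelian :: "('h \<Rightarrow> 'h) set \<Rightarrow> bool" where
  "abelian M \<longleftrightarrow> (\<forall>S\<in>M. \<forall>T\<in>M. S \<circ> T = T \<circ> S)"

definition positive_op :: "('h::complex_hilbert_space \<Rightarrow> 'h) \<Rightarrow> bool" where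
  "positive_op P \<longleftrightarrow> (\<forall>x. Im (cinner x (P x)) = 0 \<and> 0 \<le> Re (cinner x (P x)))"

definition op_le :: "('h::complex_hilbert_space \<Rightarrow> 'h) \<Rightarrow> ('h \<Rightarrow> 'h) \<Rightarrow> bool" where
  "op_le S T \<longleftrightarrow> positive_op (op_diff T S)"

definition observable :: "('h::complex_hilbert_space \<Rightarrow> 'h) set \<Rightarrow> ('h \<Rightarrow> 'h) \<Rightarrow> bool" where
  "observable M A \<longleftrightarrow> A \<in> M \<and> adj A = A \<and>
     op_le (op_scale (-1) id) A \<and> op_le A id"

definition is_state :: "('h::complex_hilbert_space \<Rightarrow> 'h) set \<Rightarrow> (('h \<Rightarrow> 'h) \<Rightarrow> complex) \<Rightarrow> bool" where
  "is_state M \<tau> \<longleftrightarrow>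
     (\<forall>S\<in>M. \<forall>T\<in>M. \<tau> (op_add S T) = \<tau> S + \<tau> T) \<and>
     (\<forall>c. \<forall>T\<in>M. \<tau> (op_scale c T) = c * \<tau> T) \<and>
     (\<forall>T\<in>M. Im (\<tau> (adj T \<circ> T)) = 0 \<and> 0 \<le> Re (\<tau> (adj T \<circ> T))) \<and>
     \<tau> id = 1"

definition oprod :: "nat set \<Rightarrow> (nat \<Rightarrow> ('h \<Rightarrow> 'h)) \<Rightarrow> ('h \<Rightarrow> 'h)" where
  "oprod S A = foldr (\<circ>) (map A (sorted_list_of_set S)) id"

text \<open>Network Xi(n,m): parties 1..m, sources 1..n; src k is the set of parties
  receiving source k.\<close>
definition network :: "nat \<Rightarrow> nat \<Rightarrow> (nat \<Rightarrow> nat set) \<Rightarrow> bool" where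
  "network n m src \<longleftrightarrow> (\<forall>k\<in>{1..n}. src k \<subseteq> {1..m})"

definition independent :: "nat \<Rightarrow> (nat \<Rightarrow> nat set) \<Rightarrow> nat set \<Rightarrow> bool" where
  "independent n src S \<longleftrightarrow>
     (\<forall>i\<in>S. \<forall>j\<in>S. i \<noteq> j \<longrightarrow> \<not> (\<exists>k\<in>{1..n}. i \<in> src k \<and> j \<in> src k))"

definition Gamma :: "nat \<Rightarrow> nat \<Rightarrow> (nat \<Rightarrow> nat set) \<Rightarrow> nat \<Rightarrow> nat set set" where
  "Gamma n m src h = {S. S \<subseteq> {1..m} \<and> card S = h \<and> independent n src S}"

definition h_max :: "nat \<Rightarrow> nat \<Rightarrow> (nat \<Rightarrow> nat set) \<Rightarrow> nat" where
  "h_max n m src = Max {h. Gamma n m src h \<noteq> {}}"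

definition join_vNA :: "nat \<Rightarrow> (nat \<Rightarrow> ('h::complex_hilbert_space \<Rightarrow> 'h) set) \<Rightarrow> ('h \<Rightarrow> 'h) set" where
  "join_vNA m M = commutant (commutant (\<Union>i\<in>{1..m}. M i))"

definition MCvNA_model :: "nat \<Rightarrow> nat \<Rightarrow> (nat \<Rightarrow> nat set) \<Rightarrow>
    (nat \<Rightarrow> ('h::complex_hilbert_space \<Rightarrow> 'h) set) \<Rightarrow> (('h \<Rightarrow> 'h) \<Rightarrow> complex) \<Rightarrow> bool" where
  "MCvNA_model n m src M \<tau> \<longleftrightarrow>
     (\<forall>i\<in>{1..m}. von_neumann_algebra (M i)) \<and>
     (\<forall>i\<in>{1..m}. \<forall>j\<in>{1..m}. i \<noteq> j \<longrightarrow> M i \<subseteq> commutant (M j)) \<and>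
     is_state (join_vNA m M) \<tau> \<and>
     (\<forall>h. 2 \<le> h \<and> h \<le> h_max n m src \<longrightarrow>
        (\<forall>R\<in>Gamma n m src h. \<forall>A. (\<forall>k\<in>R. A k \<in> M k) \<longrightarrow>
            \<tau> (oprod R A) = (\<Prod>k\<in>R. \<tau> (A k))))"

definition I_tau :: "nat \<Rightarrow> (('h::complex_hilbert_space \<Rightarrow> 'h) \<Rightarrow> complex) \<Rightarrow> nat set \<Rightarrow>
    (nat \<Rightarrow> 'h \<Rightarrow> 'h) \<Rightarrow> (nat \<Rightarrow> 'h \<Rightarrow> 'h) \<Rightarrow> complex" where
  "I_tau m \<tau> R A0 A1 =
     \<tau> (oprod {1..m} (\<lambda>i. if i \<in> R then op_add (A0 i) (A1 i) else A0 i))"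

definition J_tau :: "nat \<Rightarrow> (('h::complex_hilbert_space \<Rightarrow> 'h) \<Rightarrow> complex) \<Rightarrow> nat set \<Rightarrow>
    (nat \<Rightarrow> 'h \<Rightarrow> 'h) \<Rightarrow> (nat \<Rightarrow> 'h \<Rightarrow> 'h) \<Rightarrow> complex" where
  "J_tau m \<tau> R A0 A1 =
     \<tau> (oprod {1..m} (\<lambda>i. if i \<in> R then op_diff (A0 i) (A1 i) else A1 i))"

end

theory Submission
  imports Defs "HOL-Analysis.Convex"
begin


lemma scaleC_zero_left[simp]: "scaleC 0 (x::'a::complex_inner_space) = 0"
proof -
  have "scaleC 0 x = scaleC 0 x + scaleC 0 x" using scaleC_add_left[of 0 0 x] by simp
  then show ?thesis by simp
qed

lemma scaleC_zero_right[simp]: "scaleC c (0::'a::complex_inner_space) = 0"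
proof -
  have "scaleC c (0::'a) = scaleC c 0 + scaleC c 0" using scaleC_add_right[of c 0 0] by simp
  then show ?thesis by simp
qed

lemma scaleC_minus_right: "scaleC c (- (x::'a::complex_inner_space)) = - scaleC c x"
proof -
  have "scaleC c (-x) + scaleC c x = 0" using scaleC_add_right[of c "-x" x] by simp
  then show ?thesis by (simp add: eq_neg_iff_add_eq_0)
qed

lemma scaleC_diff_right: "scaleC c ((x::'a::complex_inner_space) - y) = scaleC c x - scaleC c y"
  using scaleC_add_right[of c x "-y"] by (simp add: scaleC_minus_right)

lemma scaleC_minus_left: "scaleC (-c) (x::'a::complex_inner_space) = - scaleC c x"
proof -
  have "scaleC (-c) x + scaleC c x = 0" using scaleC_add_left[of "-c" c x] by simp
  then show ?thesis by (simp add: eq_neg_iff_add_eq_0)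
qed

lemma scaleC_diff_left: "scaleC (a - b) (x::'a::complex_inner_space) = scaleC a x - scaleC b x"
  using scaleC_add_left[of a "-b" x] by (simp add: scaleC_minus_left)

lemma scaleC_minus1: "scaleC (-1) (x::'a::complex_inner_space) = - x"
  by (simp add: scaleC_minus_left scaleC_one)

lemma scaleC_half_double: "scaleC (1/2) (x::'a::complex_inner_space) + scaleC (1/2) x = x"
  using scaleC_add_left[of "1/2" "1/2" x] by (simp add: scaleC_one)

lemma cinner_add_left: "cinner ((x::'a::complex_inner_space) + y) z = cinner x z + cinner y z"
  by (subst (1 2 3) cinner_commute) (simp add: cinner_add_right)

lemma cinner_scaleC_left: "cinner (scaleC a (x::'a::complex_inner_space)) y = cnj a * cinner x y"
  by (subst (1 2) cinner_commute) (simp add: cinner_scaleC_right)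

lemma cinner_zero_right[simp]: "cinner (x::'a::complex_inner_space) 0 = 0"
  using cinner_scaleC_right[of x 0 0] by simp

lemma cinner_zero_left[simp]: "cinner 0 (x::'a::complex_inner_space) = 0"
  using cinner_scaleC_left[of 0 0 x] by simp

lemma cinner_minus_right: "cinner (x::'a::complex_inner_space) (- y) = - cinner x y"
  using cinner_scaleC_right[of x "-1" y] by (simp add: scaleC_minus1)

lemma cinner_minus_left: "cinner (- (x::'a::complex_inner_space)) y = - cinner x y"
  using cinner_scaleC_left[of "-1" x y] by (simp add: scaleC_minus1)

lemma cinner_diff_right: "cinner (x::'a::complex_inner_space) (y - z) = cinner x y - cinner x z"
  using cinner_add_right[of x y "-z"] by (simp add: cinner_minus_right)

lemma cinner_diff_left: "cinner ((x::'a::complex_inner_space) - y) z = cinner x z - cinner y z"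
  using cinner_add_left[of x "-y" z] by (simp add: cinner_minus_left)

lemma cinner_self_real: "cinner (x::'a::complex_inner_space) x = complex_of_real (Re (cinner x x))"
  using cinner_self_nonneg[of x] by (simp add: complex_eq_iff)

lemma cnorm_nonneg[simp]: "0 \<le> cnorm (x::'a::complex_inner_space)"
  unfolding cnorm_def using cinner_self_nonneg[of x] by simp

lemma cnorm_sq: "(cnorm (x::'a::complex_inner_space))^2 = Re (cinner x x)"
  unfolding cnorm_def by (rule real_sqrt_pow2) (use cinner_self_nonneg[of x] in blast)

lemma cinner_self_cnorm: "cinner (x::'a::complex_inner_space) x = complex_of_real ((cnorm x)^2)"
  by (metis cinner_self_real cnorm_sq)

lemma cnorm_zero[simp]: "cnorm (0::'a::complex_inner_space) = 0"
  by (simp add: cnorm_def)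

lemma cnorm_eq_0: "cnorm (x::'a::complex_inner_space) = 0 \<longleftrightarrow> x = 0"
proof
  assume "cnorm x = 0"
  then have "cinner x x = 0" by (simp add: cinner_self_cnorm)
  then show "x = 0" by (rule cinner_self_zero)
qed simp

lemma cnorm_scaleC: "cnorm (scaleC c (x::'a::complex_inner_space)) = cmod c * cnorm x"
proof -
  have "cinner (scaleC c x) (scaleC c x) = cnj c * c * cinner x x"
    by (simp add: cinner_scaleC_left cinner_scaleC_right)
  also have "cnj c * c = complex_of_real ((cmod c)^2)"
    by (simp add: complex_norm_square[symmetric] mult.commute)
  finally have "Re (cinner (scaleC c x) (scaleC c x)) = (cmod c)^2 * (cnorm x)^2"
    by (simp add: cinner_self_cnorm)
  then have "(cnorm (scaleC c x))^2 = (cmod c * cnorm x)^2"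
    by (simp add: cnorm_sq power_mult_distrib)
  then show ?thesis
    using power2_eq_imp_eq by (metis cnorm_nonneg norm_ge_zero zero_le_mult_iff)
qed

lemma cnorm_minus: "cnorm (- (x::'a::complex_inner_space)) = cnorm x"
  using cnorm_scaleC[of "-1" x] by (simp add: scaleC_minus1)

lemma cnorm_minus_commute: "cnorm ((x::'a::complex_inner_space) - y) = cnorm (y - x)"
  using cnorm_minus[of "x - y"] by simp

lemma cauchy_schwarz: "cmod (cinner (x::'a::complex_inner_space) y) \<le> cnorm x * cnorm y"
proof (cases "y = 0")
  case True then show ?thesis by simp
next
  case False
  define r where "r = Re (cinner y y)"
  have r: "r > 0" using False cnorm_eq_0[of y] cnorm_sq[of y] unfolding r_def
    by (metis cnorm_nonneg less_eq_real_def zero_less_power2)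
  have ry: "cinner y y = complex_of_real r" unfolding r_def by (rule cinner_self_real)
  define t where "t = cinner y x / r"
  have "cinner (x - scaleC t y) (x - scaleC t y)
      = cinner x x - t * cinner x y - cnj t * cinner y x + cnj t * t * cinner y y"
    by (simp add: cinner_diff_left cinner_diff_right cinner_scaleC_left cinner_scaleC_right algebra_simps)
  also have "\<dots> = cinner x x - cinner y x * cnj (cinner y x) / r"
    using r unfolding t_def ry
    by (simp add: field_simps) (metis cinner_commute)
  finally have eq: "cinner (x - scaleC t y) (x - scaleC t y) = cinner x x - cinner y x * cnj (cinner y x) / r" .
  have "0 \<le> Re (cinner (x - scaleC t y) (x - scaleC t y))" using cinner_self_nonneg by blast
  also have "\<dots> = Re (cinner x x) - (cmod (cinner y x))^2 / r"
    unfolding eq by (simp add: complex_norm_square[symmetric])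
  finally have "(cmod (cinner y x))^2 \<le> Re (cinner x x) * r" using r by (simp add: field_simps)
  also have "\<dots> = (cnorm x * cnorm y)^2" by (simp add: r_def cnorm_sq power_mult_distrib)
  finally have "(cmod (cinner x y))^2 \<le> (cnorm x * cnorm y)^2"
    by (metis cinner_commute complex_mod_cnj)
  then show ?thesis by (rule power2_le_imp_le) simp
qed

lemma cnorm_triangle: "cnorm ((x::'a::complex_inner_space) + y) \<le> cnorm x + cnorm y"
proof -
  have "(cnorm (x + y))^2 = Re (cinner x x) + Re (cinner y y) + 2 * Re (cinner x y)"
  proof -
    have "cinner (x+y) (x+y) = cinner x x + cinner y y + (cinner x y + cnj (cinner x y))"
      by (simp add: cinner_add_left cinner_add_right) (metis cinner_commute)
    then show ?thesis by (simp add: cnorm_sq)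
  qed
  also have "\<dots> \<le> (cnorm x)^2 + (cnorm y)^2 + 2 * (cnorm x * cnorm y)"
    using cauchy_schwarz[of x y] abs_Re_le_cmod[of "cinner x y"] by (simp add: cnorm_sq)
  also have "\<dots> = (cnorm x + cnorm y)^2" by (simp add: power2_eq_square algebra_simps)
  finally show ?thesis by (rule power2_le_imp_le) simp
qed

lemma cnorm_triangle_diff: "cnorm ((x::'a::complex_inner_space) - z) \<le> cnorm (x - y) + cnorm (y - z)"
  using cnorm_triangle[of "x - y" "y - z"] by simp

lemma cnorm_diff_le: "cnorm ((x::'a::complex_inner_space) - y) \<le> cnorm x + cnorm y"
  using cnorm_triangle[of x "-y"] by (simp add: cnorm_minus)

lemma cnorm_rev_triangle: "\<bar>cnorm (x::'a::complex_inner_space) - cnorm y\<bar> \<le> cnorm (x - y)"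
  using cnorm_triangle[of "x - y" y] cnorm_triangle[of "y - x" x] cnorm_minus_commute[of x y]
  by auto



definition lin :: "('a::complex_inner_space \<Rightarrow> 'a) \<Rightarrow> bool" where
  "lin T \<longleftrightarrow> (\<forall>x y. T (x + y) = T x + T y) \<and> (\<forall>c x. T (scaleC c x) = scaleC c (T x))"

definition symm :: "('a::complex_hilbert_space \<Rightarrow> 'a) \<Rightarrow> bool" where
  "symm T \<longleftrightarrow> bounded_op T \<and> (\<forall>x y. cinner (T x) y = cinner x (T y))"

lemma lin_add: "lin T \<Longrightarrow> T (x + y) = T x + T y" by (simp add: lin_def)
lemma lin_scale: "lin T \<Longrightarrow> T (scaleC c x) = scaleC c (T x)" by (simp add: lin_def)
lemma lin_zero: "lin T \<Longrightarrow> T 0 = 0"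
  using lin_scale[of T 0 0] by simp
lemma lin_minus: "lin T \<Longrightarrow> T (- x) = - T x"
  using lin_scale[of T "-1" x] by (simp add: scaleC_minus1)
lemma lin_diff: "lin T \<Longrightarrow> T (x - y) = T x - T y"
  using lin_add[of T x "-y"] lin_minus[of T y] by simp

lemma bounded_lin: "bounded_op T \<Longrightarrow> lin T"
  by (simp add: bounded_op_def lin_def)

lemma bounded_bound: assumes "bounded_op T" shows "\<exists>K\<ge>0. \<forall>x. cnorm (T x) \<le> K * cnorm x"
proof -
  obtain K where K: "\<forall>x. cnorm (T x) \<le> K * cnorm x" using assms by (auto simp: bounded_op_def)
  have "\<forall>x. cnorm (T x) \<le> \<bar>K\<bar> * cnorm x"
  proof
    fix x show "cnorm (T x) \<le> \<bar>K\<bar> * cnorm x" using K[rule_format, of x]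
      by (meson abs_ge_self cnorm_nonneg mult_right_mono order_trans)
  qed
  then show ?thesis by (intro exI[of _ "\<bar>K\<bar>"]) simp
qed

lemma bounded_opI:
  assumes "lin T" "\<And>x. cnorm (T x) \<le> K * cnorm x"
  shows "bounded_op T"
  using assms unfolding bounded_op_def lin_def by blast

lemma bounded_op_id: "bounded_op (id :: 'a::complex_hilbert_space \<Rightarrow> 'a)"
  by (rule bounded_opI[where K=1]) (auto simp: lin_def)

lemma bounded_op_comp:
  assumes "bounded_op S" "bounded_op T" shows "bounded_op (S \<circ> T)"
proof -
  obtain K where K: "K\<ge>0" "\<forall>x. cnorm (S x) \<le> K * cnorm x" using bounded_bound[OF assms(1)] by blast
  obtain L where L: "L\<ge>0" "\<forall>x. cnorm (T x) \<le> L * cnorm x" using bounded_bound[OF assms(2)] by blast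
  have "cnorm (S (T x)) \<le> (K * L) * cnorm x" for x
  proof -
    have "cnorm (S (T x)) \<le> K * cnorm (T x)" using K by blast
    also have "\<dots> \<le> K * (L * cnorm x)" using L K by (simp add: mult_left_mono)
    finally show ?thesis by simp
  qed
  moreover have "lin (S \<circ> T)" using bounded_lin[OF assms(1)] bounded_lin[OF assms(2)]
    by (simp add: lin_def)
  ultimately show ?thesis by (intro bounded_opI[where K="K*L"]) auto
qed

lemma bounded_op_add:
  assumes "bounded_op S" "bounded_op T" shows "bounded_op (op_add S T)"
proof -
  obtain K where K: "K\<ge>0" "\<forall>x. cnorm (S x) \<le> K * cnorm x" using bounded_bound[OF assms(1)] by blast
  obtain L where L: "L\<ge>0" "\<forall>x. cnorm (T x) \<le> L * cnorm x" using bounded_bound[OF assms(2)] by blast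
  have "cnorm (S x + T x) \<le> (K + L) * cnorm x" for x
    using cnorm_triangle[of "S x" "T x"] K L by (smt (verit) distrib_right)
  moreover have "lin (op_add S T)" using bounded_lin[OF assms(1)] bounded_lin[OF assms(2)]
    by (simp add: lin_def op_add_def scaleC_add_right algebra_simps)
  ultimately show ?thesis by (intro bounded_opI[where K="K+L"]) (auto simp: op_add_def)
qed

lemma bounded_op_scale:
  assumes "bounded_op T" shows "bounded_op (op_scale c T)"
proof -
  obtain K where K: "K\<ge>0" "\<forall>x. cnorm (T x) \<le> K * cnorm x" using bounded_bound[OF assms(1)] by blast
  have "cnorm (scaleC c (T x)) \<le> (cmod c * K) * cnorm x" for x
    using K by (simp add: cnorm_scaleC mult.assoc mult_left_mono)
  moreover have "lin (op_scale c T)" using bounded_lin[OF assms(1)]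
    by (simp add: lin_def op_scale_def scaleC_add_right scaleC_scaleC mult.commute)
  ultimately show ?thesis by (intro bounded_opI[where K="cmod c * K"]) (auto simp: op_scale_def)
qed

lemma op_diff_eq: "op_diff S T = op_add S (op_scale (-1) T)"
  by (simp add: op_diff_def op_add_def op_scale_def scaleC_minus1 fun_eq_iff)

lemma bounded_op_diff:
  assumes "bounded_op S" "bounded_op T" shows "bounded_op (op_diff S T)"
  unfolding op_diff_eq by (intro bounded_op_add bounded_op_scale assms)

lemma commutant_BH: "commutant Q \<subseteq> BH" by (auto simp: commutant_def)

lemma commutant_antimono: "A \<subseteq> B \<Longrightarrow> commutant B \<subseteq> commutant A"
  by (auto simp: commutant_def)

lemma commutant_id: "id \<in> commutant Q"
  by (simp add: commutant_def BH_def bounded_op_id)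

lemma commutant_comp: "S \<in> commutant Q \<Longrightarrow> T \<in> commutant Q \<Longrightarrow> S \<circ> T \<in> commutant Q"
  unfolding commutant_def BH_def
  by (auto intro: bounded_op_comp simp: comp_assoc) (metis comp_assoc)

lemma commutant_add:
  assumes "Q \<subseteq> BH" "S \<in> commutant Q" "T \<in> commutant Q" shows "op_add S T \<in> commutant Q"
proof -
  have "op_add S T \<circ> U = U \<circ> op_add S T" if "U \<in> Q" for U
  proof -
    have l: "lin U" using that assms(1) by (auto simp: BH_def bounded_lin)
    have "S \<circ> U = U \<circ> S" "T \<circ> U = U \<circ> T" using that assms by (auto simp: commutant_def)
    then show ?thesis using lin_add[OF l] by (auto simp: op_add_def fun_eq_iff)
  qed
  then show ?thesis using assms by (auto simp: commutant_def BH_def intro: bounded_op_add)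
qed

lemma commutant_scale:
  assumes "Q \<subseteq> BH" "T \<in> commutant Q" shows "op_scale c T \<in> commutant Q"
proof -
  have "op_scale c T \<circ> U = U \<circ> op_scale c T" if "U \<in> Q" for U
  proof -
    have l: "lin U" using that assms(1) by (auto simp: BH_def bounded_lin)
    have "T \<circ> U = U \<circ> T" using that assms by (auto simp: commutant_def)
    then show ?thesis using lin_scale[OF l] by (auto simp: op_scale_def fun_eq_iff)
  qed
  then show ?thesis using assms by (auto simp: commutant_def BH_def intro: bounded_op_scale)
qed

lemma commutant_diff:
  assumes "Q \<subseteq> BH" "S \<in> commutant Q" "T \<in> commutant Q" shows "op_diff S T \<in> commutant Q"
  unfolding op_diff_eq using assms by (intro commutant_add commutant_scale)

lemma vec_eq_by_cinner:
  assumes "\<And>z. cinner z (u::'a::complex_inner_space) = cinner z v" shows "u = v"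
proof -
  have "cinner (u - v) (u - v) = 0" using assms[of "u - v"] by (simp add: cinner_diff_right)
  then have "u - v = 0" by (rule cinner_self_zero)
  then show ?thesis by simp
qed

lemma adj_symm:
  assumes "symm T" shows "adj T = T"
proof -
  have ex: "\<exists>S. bounded_op S \<and> (\<forall>x y. cinner (T x) y = cinner x (S y))"
    using assms by (auto simp: symm_def)
  define S where "S = adj T"
  have S: "bounded_op S \<and> (\<forall>x y. cinner (T x) y = cinner x (S y))"
    unfolding S_def adj_def by (rule someI_ex[OF ex])
  have "S y = T y" for y
    by (rule vec_eq_by_cinner) (use S assms in \<open>auto simp: symm_def\<close>)
  then show ?thesis by (auto simp: S_def)
qed

lemma symm_id: "symm (id :: 'a::complex_hilbert_space \<Rightarrow> 'a)"
  by (simp add: symm_def bounded_op_id)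

lemma symm_comp:
  assumes "symm S" "symm T" "S \<circ> T = T \<circ> S" shows "symm (S \<circ> T)"
proof -
  have "cinner (S (T x)) y = cinner x (S (T y))" for x y
  proof -
    have "cinner (S (T x)) y = cinner (T x) (S y)" using assms(1) by (simp add: symm_def)
    also have "\<dots> = cinner x (T (S y))" using assms(2) by (simp add: symm_def)
    also have "T (S y) = S (T y)" using assms(3) by (metis comp_apply)
    finally show ?thesis .
  qed
  then show ?thesis using assms by (simp add: symm_def bounded_op_comp)
qed

lemma symm_diff_id:
  assumes "symm T" shows "symm (op_diff id T)"
proof -
  have "cinner (x - T x) y = cinner x (y - T y)" for x y
    using assms by (simp add: cinner_diff_left cinner_diff_right symm_def)
  then show ?thesis using assms bounded_op_diff[OF bounded_op_id, of T]
    by (simp add: symm_def op_diff_def)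
qed

lemma real_quadratic_symm:
  assumes l: "lin T" and r: "\<And>z. Im (cinner z (T z)) = 0"
  shows "cinner (T x) y = cinner x (T y)"
proof -
  define u where "u = cinner x (T y)"
  define v where "v = cinner y (T x)"
  have e1: "cinner (x + y) (T (x + y)) = cinner x (T x) + cinner y (T y) + u + v"
    by (simp add: lin_add[OF l] cinner_add_left cinner_add_right u_def v_def)
  have e2: "cinner (x + scaleC \<i> y) (T (x + scaleC \<i> y)) = cinner x (T x) + cinner y (T y) + \<i> * u - \<i> * v"
    by (simp add: lin_add[OF l] lin_scale[OF l] cinner_add_left cinner_add_right
        cinner_scaleC_left cinner_scaleC_right u_def v_def algebra_simps)
  have "Im (u + v) = 0" using e1 r[of "x+y"] r[of x] r[of y] by simp
  moreover have "Re (u - v) = 0" using e2 r[of "x+ scaleC \<i> y"] r[of x] r[of y] by simp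
  ultimately have "u = cnj v" by (simp add: complex_eq_iff)
  then show ?thesis by (simp add: u_def v_def) (metis cinner_commute)
qed

lemma observable_symm_contr:
  assumes "observable M a" "M \<subseteq> BH"
  shows "symm a" "\<And>x. cnorm (a x) \<le> cnorm x"
proof -
  have b: "bounded_op a" using assms by (auto simp: observable_def BH_def)
  have l: "lin a" by (rule bounded_lin[OF b])
  have p1: "\<And>x. Im (cinner x (a x + x)) = 0 \<and> 0 \<le> Re (cinner x (a x + x))"
    using assms(1) unfolding observable_def op_le_def positive_op_def op_diff_def op_scale_def
    by (simp add: scaleC_minus1)
  have p2: "\<And>x. Im (cinner x (x - a x)) = 0 \<and> 0 \<le> Re (cinner x (x - a x))"
    using assms(1) unfolding observable_def op_le_def positive_op_def op_diff_def by simp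
  have im: "Im (cinner z (a z)) = 0" for z
    using p1[of z] cinner_self_nonneg[of z] by (simp add: cinner_add_right)
  have q: "\<bar>Re (cinner z (a z))\<bar> \<le> (cnorm z)^2" for z
    using p1[of z] p2[of z] by (simp add: cinner_add_right cinner_diff_right cnorm_sq abs_le_iff)
  have sy: "cinner (a x) y = cinner x (a y)" for x y by (rule real_quadratic_symm[OF l im])
  show "symm a" using b sy by (simp add: symm_def)
  fix x
  show "cnorm (a x) \<le> cnorm x"
  proof (cases "cnorm (a x) = 0")
    case True then show ?thesis by simp
  next
    case False
    define y where "y = a x"
    have ny: "cnorm y > 0" using False y_def cnorm_nonneg by (metis less_eq_real_def)
    have key: "4 * t * (cnorm y)^2 \<le> 2 * (cnorm x)^2 + 2 * t^2 * (cnorm y)^2" if "t > 0" for t :: real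
    proof -
      define w where "w = scaleC (complex_of_real t) y"
      have exp: "\<And>s. cinner (x + scaleC s w) (a (x + scaleC s w)) =
            cinner x (a x) + s * cinner x (a w) + cnj s * cinner w (a x) + cnj s * s * cinner w (a w)"
        by (simp add: lin_add[OF l] lin_scale[OF l] cinner_add_left cinner_add_right
            cinner_scaleC_left cinner_scaleC_right algebra_simps)
      have exn: "\<And>s. cinner (x + scaleC s w) (x + scaleC s w) =
            cinner x x + s * cinner x w + cnj s * cinner w x + cnj s * s * cinner w w"
        by (simp add: cinner_add_left cinner_add_right cinner_scaleC_left cinner_scaleC_right algebra_simps)
      have cw: "cinner x (a w) = complex_of_real (t * (cnorm y)^2)"
        using sy[of x w] by (simp add: w_def lin_scale[OF l] cinner_scaleC_right y_def cinner_self_cnorm) metis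
      have cw2: "cinner w (a x) = complex_of_real (t * (cnorm y)^2)"
        by (simp add: w_def cinner_scaleC_left y_def cinner_self_cnorm)
      have "Re (cinner (x + scaleC 1 w) (a (x + scaleC 1 w))) - Re (cinner (x + scaleC (-1) w) (a (x + scaleC (-1) w)))
          = 4 * t * (cnorm y)^2"
        unfolding exp cw cw2 by simp
      moreover have "Re (cinner (x + scaleC 1 w) (a (x + scaleC 1 w))) \<le> (cnorm (x + scaleC 1 w))^2"
        using q[of "x + scaleC 1 w"] by simp
      moreover have "- Re (cinner (x + scaleC (-1) w) (a (x + scaleC (-1) w))) \<le> (cnorm (x + scaleC (-1) w))^2"
        using q[of "x + scaleC (-1) w"] by simp
      moreover have "(cnorm (x + scaleC 1 w))^2 + (cnorm (x + scaleC (-1) w))^2 = 2 * (cnorm x)^2 + 2 * (cnorm w)^2"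
        using exn[of 1] exn[of "-1"] by (simp add: cnorm_sq)
      moreover have "cnorm w = t * cnorm y" using that by (simp add: w_def cnorm_scaleC)
      ultimately show ?thesis by (simp add: power_mult_distrib)
    qed
    show ?thesis
    proof (cases "cnorm x = 0")
      case True
      then have "x = 0" by (simp add: cnorm_eq_0)
      then show ?thesis by (simp add: lin_zero[OF l])
    next
      case False
      then have nx: "cnorm x > 0" using cnorm_nonneg by (metis less_eq_real_def)
      have "4 * (cnorm x / cnorm y) * (cnorm y)^2 \<le> 2 * (cnorm x)^2 + 2 * (cnorm x / cnorm y)^2 * (cnorm y)^2"
        using key[of "cnorm x / cnorm y"] nx ny by simp
      then have "4 * cnorm x * cnorm y \<le> 4 * (cnorm x)^2"
        using ny by (simp add: power2_eq_square field_simps)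
      then have "cnorm y \<le> cnorm x" using nx by (simp add: power2_eq_square)
      then show ?thesis by (simp add: y_def)
    qed
  qed
qed



lemma Lim_null_comparison:
  fixes f :: "'a \<Rightarrow> 'b::real_normed_vector"
  assumes "eventually (\<lambda>x. norm (f x) \<le> g x) net" "(g \<longlongrightarrow> 0) net"
  shows "(f \<longlongrightarrow> 0) net"
  using assms(2)
proof (rule metric_tendsto_imp_tendsto)
  show "eventually (\<lambda>x. dist (f x) 0 \<le> dist (g x) 0) net"
    using assms(1) by (rule eventually_mono) (simp add: dist_norm)
qed

definition conv :: "(nat \<Rightarrow> 'a::complex_inner_space) \<Rightarrow> 'a \<Rightarrow> bool" where
  "conv X L \<longleftrightarrow> (\<lambda>p. cnorm (X p - L)) \<longlonglongrightarrow> 0"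

lemma conv_comparison:
  assumes "\<And>p. cnorm (X p - L) \<le> f p" "f \<longlonglongrightarrow> 0" shows "conv X L"
  unfolding conv_def
  by (rule Lim_null_comparison[OF _ assms(2)]) (use assms(1) in auto)

lemma conv_unique:
  assumes "conv X L" "conv X L'" shows "L = L'"
proof -
  have le: "cnorm (L - L') \<le> cnorm (X p - L) + cnorm (X p - L')" for p
    using cnorm_triangle_diff[of L L' "X p"] cnorm_minus_commute[of L "X p"] by simp
  have "(\<lambda>p. cnorm (X p - L) + cnorm (X p - L')) \<longlonglongrightarrow> 0 + 0"
    using assms unfolding conv_def by (intro tendsto_add)
  then have "cnorm (L - L') \<le> 0"
    by (intro LIMSEQ_le[OF tendsto_const]) (use le in auto)
  then have "cnorm (L - L') = 0" using cnorm_nonneg by (metis order_antisym)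
  then show ?thesis by (simp add: cnorm_eq_0)
qed

lemma conv_add:
  assumes "conv X L" "conv Y M" shows "conv (\<lambda>p. X p + Y p) (L + M)"
proof (rule conv_comparison)
  show "cnorm (X p + Y p - (L + M)) \<le> cnorm (X p - L) + cnorm (Y p - M)" for p
    using cnorm_triangle[of "X p - L" "Y p - M"] by (simp add: algebra_simps)
  show "(\<lambda>p. cnorm (X p - L) + cnorm (Y p - M)) \<longlonglongrightarrow> 0"
    using tendsto_add[OF assms[unfolded conv_def]] by simp
qed

lemma conv_bounded_apply:
  assumes "conv X L" "lin T" "\<And>x. cnorm (T x) \<le> K * cnorm x"
  shows "conv (\<lambda>p. T (X p)) (T L)"
proof (rule conv_comparison)
  show "cnorm (T (X p) - T L) \<le> K * cnorm (X p - L)" for p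
    using assms(3)[of "X p - L"] by (simp add: lin_diff[OF assms(2)])
  show "(\<lambda>p. K * cnorm (X p - L)) \<longlonglongrightarrow> 0"
    using tendsto_mult_right_zero[OF assms(1)[unfolded conv_def]] by simp
qed

lemma conv_scale:
  assumes "conv X L" shows "conv (\<lambda>p. scaleC c (X p)) (scaleC c L)"
proof (rule conv_comparison)
  show "cnorm (scaleC c (X p) - scaleC c L) \<le> cmod c * cnorm (X p - L)" for p
    by (simp add: scaleC_diff_right[symmetric] cnorm_scaleC)
  show "(\<lambda>p. cmod c * cnorm (X p - L)) \<longlonglongrightarrow> 0"
    using tendsto_mult_right_zero[OF assms(1)[unfolded conv_def]] by simp
qed

lemma conv_const: "conv (\<lambda>p. x) x" by (simp add: conv_def)

lemma conv_Suc: "conv X L \<Longrightarrow> conv (\<lambda>n. X (Suc n)) L"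
  unfolding conv_def by (rule LIMSEQ_Suc[where f="\<lambda>p. cnorm (X p - L)"])

lemma conv_cinner_left:
  assumes "conv X L" shows "(\<lambda>p. cinner (X p) y) \<longlonglongrightarrow> cinner L y"
proof -
  have "(\<lambda>p. cinner (X p) y - cinner L y) \<longlonglongrightarrow> 0"
  proof (rule Lim_null_comparison)
    show "\<forall>\<^sub>F p in sequentially. norm (cinner (X p) y - cinner L y) \<le> cnorm (X p - L) * cnorm y"
      using cauchy_schwarz[of "X p - L" y for p] by (simp add: cinner_diff_left)
    show "(\<lambda>p. cnorm (X p - L) * cnorm y) \<longlonglongrightarrow> 0"
      using tendsto_mult_left_zero[OF assms(1)[unfolded conv_def]] by simp
  qed
  then show ?thesis by (simp add: LIM_zero_iff)
qed

lemma conv_cinner_right: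
  assumes "conv X L" shows "(\<lambda>p. cinner y (X p)) \<longlonglongrightarrow> cinner y L"
proof -
  have "(\<lambda>p. cnj (cinner (X p) y)) \<longlonglongrightarrow> cnj (cinner L y)"
    by (rule tendsto_cnj[OF conv_cinner_left[OF assms]])
  then show ?thesis by (metis (no_types, lifting) cinner_commute ext)
qed

lemma conv_cnorm:
  assumes "conv X L" shows "(\<lambda>p. cnorm (X p)) \<longlonglongrightarrow> cnorm L"
proof -
  have "(\<lambda>p. cnorm (X p) - cnorm L) \<longlonglongrightarrow> 0"
  proof (rule Lim_null_comparison)
    show "\<forall>\<^sub>F p in sequentially. norm (cnorm (X p) - cnorm L) \<le> cnorm (X p - L)"
      by (intro always_eventually allI) (simp add: cnorm_rev_triangle)
  qed (use assms in \<open>simp add: conv_def\<close>)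
  then show ?thesis by (simp add: LIM_zero_iff)
qed

lemma conv_complete:
  fixes X :: "nat \<Rightarrow> 'a::complex_hilbert_space"
  assumes "\<And>e. e > 0 \<Longrightarrow> \<exists>N. \<forall>p\<ge>N. \<forall>q\<ge>N. cnorm (X p - X q) < e"
  shows "\<exists>L. conv X L"
proof -
  obtain L where L: "\<forall>e>0. \<exists>N. \<forall>p\<ge>N. sqrt (Re (cinner (X p - L) (X p - L))) < e"
    using cauchy_complete[of X] assms unfolding cnorm_def by blast
  have "conv X L" unfolding conv_def
  proof (rule LIMSEQ_I)
    fix r :: real assume "r > 0"
    then obtain N where "\<forall>p\<ge>N. cnorm (X p - L) < r" using L unfolding cnorm_def by blast
    then show "\<exists>no. \<forall>n\<ge>no. norm (cnorm (X n - L) - 0) < r" by auto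
  qed
  then show ?thesis by blast
qed

section \<open>Square roots via iteration\<close>

primrec Yseq :: "('a::complex_inner_space \<Rightarrow> 'a) \<Rightarrow> nat \<Rightarrow> 'a \<Rightarrow> 'a" where
  "Yseq A 0 = (\<lambda>x. 0)"
| "Yseq A (Suc n) = (\<lambda>x. scaleC (1/2) (A x + Yseq A n (Yseq A n x)))"

primrec rseq :: "nat \<Rightarrow> real" where
  "rseq 0 = 0"
| "rseq (Suc n) = (1 + (rseq n)^2) / 2"

lemma rseq_bounds: "0 \<le> rseq n \<and> rseq n \<le> 1"
proof (induction n)
  case (Suc n)
  then have "(rseq n)^2 \<le> 1" by (simp add: power_le_one)
  then show ?case by simp
qed simp

lemma rseq_mono: "rseq n \<le> rseq (Suc n)"
proof -
  have "0 \<le> (1 - rseq n)^2 / 2" by simp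
  then show ?thesis by (simp add: power2_eq_square algebra_simps)
qed

lemma rseq_Cauchy: "Cauchy rseq"
proof -
  have "incseq rseq" by (rule incseq_SucI) (rule rseq_mono)
  moreover have "bdd_above (range rseq)" by (rule bdd_aboveI[of _ 1]) (use rseq_bounds in auto)
  ultimately have "rseq \<longlonglongrightarrow> (SUP i. rseq i)" by (rule LIMSEQ_incseq_SUP[rotated])
  then show ?thesis by (rule LIMSEQ_imp_Cauchy)
qed

lemma rseq_incseq: "incseq rseq" by (rule incseq_SucI) (rule rseq_mono)

lemma rseq_mono_le: "p \<le> q \<Longrightarrow> rseq p \<le> rseq q"
  by (rule incseqD[OF rseq_incseq])

locale contr_op =
  fixes A :: "'a::complex_hilbert_space \<Rightarrow> 'a"
  assumes linA: "lin A" and normA: "\<And>x. cnorm (A x) \<le> cnorm x"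
begin

abbreviation "Y \<equiv> Yseq A"

lemma Yseq_Suc: "Yseq A (Suc n) x = scaleC (1/2) (A x + Yseq A n (Yseq A n x))" by simp

declare Yseq.simps(2)[simp del]

lemma Yseq_Suc_diff: "Yseq A (Suc m) x - Yseq A (Suc n) x = scaleC (1/2) (Yseq A m (Yseq A m x) - Yseq A n (Yseq A n x))"
  by (simp add: Yseq_Suc scaleC_diff_right[symmetric])

lemma Y_lin: "lin (Y n)"
proof (induction n)
  case 0 then show ?case by (simp add: lin_def)
next
  case (Suc n)
  have "Y (Suc n) (x + y) = Y (Suc n) x + Y (Suc n) y" for x y
    by (simp add: Yseq_Suc lin_add[OF linA] lin_add[OF Suc] scaleC_add_right[symmetric] algebra_simps)
  moreover have "Y (Suc n) (scaleC c x) = scaleC c (Y (Suc n) x)" for c x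
    by (simp add: Yseq_Suc lin_scale[OF linA] lin_scale[OF Suc] scaleC_add_right[symmetric] scaleC_scaleC mult.commute)
  ultimately show ?case by (simp add: lin_def)
qed

lemma Y_norm: "cnorm (Y n x) \<le> rseq n * cnorm x"
proof (induction n arbitrary: x)
  case 0 then show ?case by simp
next
  case (Suc n)
  have r: "0 \<le> rseq n" using rseq_bounds[of n] by simp
  have a: "cnorm (Y n x) \<le> rseq n * cnorm x" by (rule Suc)
  have b: "cnorm (Y n (Y n x)) \<le> rseq n * cnorm (Y n x)" by (rule Suc)
  have c: "rseq n * cnorm (Y n x) \<le> rseq n * (rseq n * cnorm x)" by (rule mult_left_mono[OF a r])
  have "cnorm (Y (Suc n) x) = (1/2) * cnorm (A x + Y n (Y n x))" by (simp add: Yseq_Suc cnorm_scaleC)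
  also have "\<dots> \<le> (1/2) * (cnorm x + rseq n * (rseq n * cnorm x))"
    using cnorm_triangle[of "A x" "Y n (Y n x)"] normA[of x] b c by simp
  also have "\<dots> = rseq (Suc n) * cnorm x" by (simp add: power2_eq_square algebra_simps)
  finally show ?case .
qed

lemma Y_norm1: "cnorm (Y n x) \<le> cnorm x"
proof -
  have "rseq n * cnorm x \<le> 1 * cnorm x" by (rule mult_right_mono) (use rseq_bounds[of n] in auto)
  then show ?thesis using Y_norm[of n x] by simp
qed

lemma Y_step: "cnorm (Y (Suc n) x - Y n x) \<le> (rseq (Suc n) - rseq n) * cnorm x"
proof (induction n arbitrary: x)
  case 0
  then show ?case using normA[of x] by (simp add: cnorm_scaleC Yseq_Suc)
next
  case (Suc n)
  define d where "d = rseq (Suc n) - rseq n"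
  have d0: "d \<ge> 0" using rseq_mono[of n] by (simp add: d_def)
  have r0: "0 \<le> rseq n" "0 \<le> rseq (Suc n)" using rseq_bounds by auto
  have pq: "Y (Suc n) (Y (Suc n) x) - Y n (Y n x) = Y (Suc n) (Y (Suc n) x - Y n x) + (Y (Suc n) (Y n x) - Y n (Y n x))"
    by (simp add: lin_diff[OF Y_lin])
  have eq: "Y (Suc (Suc n)) x - Y (Suc n) x
      = scaleC (1/2) (Y (Suc n) (Y (Suc n) x - Y n x) + (Y (Suc n) (Y n x) - Y n (Y n x)))"
    unfolding pq[symmetric] by (rule Yseq_Suc_diff)
  have i1: "cnorm (Y (Suc n) x - Y n x) \<le> d * cnorm x" unfolding d_def by (rule Suc)
  have "cnorm (Y (Suc n) (Y (Suc n) x - Y n x)) \<le> rseq (Suc n) * cnorm (Y (Suc n) x - Y n x)"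
    by (rule Y_norm)
  also have "\<dots> \<le> rseq (Suc n) * (d * cnorm x)" by (rule mult_left_mono[OF i1 r0(2)])
  finally have t1: "cnorm (Y (Suc n) (Y (Suc n) x - Y n x)) \<le> rseq (Suc n) * (d * cnorm x)" .
  have "cnorm (Y (Suc n) (Y n x) - Y n (Y n x)) \<le> d * cnorm (Y n x)" unfolding d_def by (rule Suc)
  also have "\<dots> \<le> d * (rseq n * cnorm x)" by (rule mult_left_mono[OF Y_norm d0])
  finally have t2: "cnorm (Y (Suc n) (Y n x) - Y n (Y n x)) \<le> d * (rseq n * cnorm x)" .
  have "cnorm (Y (Suc (Suc n)) x - Y (Suc n) x) \<le> (1/2) * (rseq (Suc n) * (d * cnorm x) + d * (rseq n * cnorm x))"
    unfolding eq cnorm_scaleC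
    using cnorm_triangle[of "Y (Suc n) (Y (Suc n) x - Y n x)" "Y (Suc n) (Y n x) - Y n (Y n x)"] t1 t2 by simp
  also have "\<dots> = (rseq (Suc (Suc n)) - rseq (Suc n)) * cnorm x"
    by (simp add: d_def power2_eq_square algebra_simps)
  finally show ?case .
qed

lemma Y_diff: "p \<le> q \<Longrightarrow> cnorm (Y q x - Y p x) \<le> (rseq q - rseq p) * cnorm x"
proof (induction q rule: dec_induct)
  case base then show ?case by simp
next
  case (step q)
  have "cnorm (Y (Suc q) x - Y p x) \<le> cnorm (Y (Suc q) x - Y q x) + cnorm (Y q x - Y p x)"
    by (rule cnorm_triangle_diff)
  also have "\<dots> \<le> (rseq (Suc q) - rseq q) * cnorm x + (rseq q - rseq p) * cnorm x"
    using Y_step[of q x] step.IH by simp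
  finally show ?case by (simp add: algebra_simps)
qed

lemma Y_conv_ex: "\<exists>L. conv (\<lambda>n. Y n x) L"
proof (rule conv_complete)
  fix e :: real assume e: "e > 0"
  define e' where "e' = e / (cnorm x + 1)"
  have e': "e' > 0" using e by (simp add: e'_def add_nonneg_pos)
  obtain N where N: "\<forall>m\<ge>N. \<forall>n\<ge>N. norm (rseq m - rseq n) < e'"
    using CauchyD[OF rseq_Cauchy e'] by blast
  have "cnorm (Y p x - Y q x) < e" if "p \<ge> N" "q \<ge> N" for p q
  proof -
    have "cnorm (Y p x - Y q x) \<le> \<bar>rseq p - rseq q\<bar> * cnorm x"
    proof (cases "q \<le> p")
      case True then show ?thesis using Y_diff[OF True, of x] by (simp add: rseq_mono_le)
    next
      case False
      then have "p \<le> q" by simp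
      then have "\<bar>rseq p - rseq q\<bar> = rseq q - rseq p" using rseq_mono_le[of p q] by simp
      then show ?thesis using Y_diff[OF \<open>p \<le> q\<close>, of x] cnorm_minus_commute[of "Y p x" "Y q x"]
        by simp
    qed
    also have "\<dots> \<le> e' * cnorm x"
      using N that by (intro mult_right_mono) (auto simp: less_imp_le)
    also have "\<dots> < e"
    proof -
      have "e' * cnorm x < e' * (cnorm x + 1)" using e' by simp
      also have "\<dots> = e" proof -
        have "cnorm x + 1 \<noteq> 0" using cnorm_nonneg[of x] by linarith
        then show ?thesis unfolding e'_def by simp
      qed
      finally show ?thesis .
    qed
    finally show ?thesis .
  qed
  then show "\<exists>N. \<forall>p\<ge>N. \<forall>q\<ge>N. cnorm (Y p x - Y q x) < e" by blast
qed

definition Ylim :: "'a \<Rightarrow> 'a" where "Ylim x = (SOME L. conv (\<lambda>n. Y n x) L)"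

lemma Ylim_conv: "conv (\<lambda>n. Y n x) (Ylim x)"
  unfolding Ylim_def by (rule someI_ex[OF Y_conv_ex])

lemma Ylim_lin: "lin Ylim"
proof -
  have "Ylim (x + y) = Ylim x + Ylim y" for x y
  proof (rule conv_unique[OF Ylim_conv])
    show "conv (\<lambda>n. Y n (x + y)) (Ylim x + Ylim y)"
      using conv_add[OF Ylim_conv[of x] Ylim_conv[of y]] by (simp add: lin_add[OF Y_lin])
  qed
  moreover have "Ylim (scaleC c x) = scaleC c (Ylim x)" for c x
  proof (rule conv_unique[OF Ylim_conv])
    show "conv (\<lambda>n. Y n (scaleC c x)) (scaleC c (Ylim x))"
      using conv_scale[OF Ylim_conv[of x]] by (simp add: lin_scale[OF Y_lin])
  qed
  ultimately show ?thesis by (simp add: lin_def)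
qed

lemma Ylim_norm: "cnorm (Ylim x) \<le> cnorm x"
  by (rule LIMSEQ_le_const2[OF conv_cnorm[OF Ylim_conv]]) (use Y_norm1 in auto)

lemma Ylim_eq: "Ylim x = scaleC (1/2) (A x + Ylim (Ylim x))"
proof (rule conv_unique)
  show "conv (\<lambda>n. Y (Suc n) x) (Ylim x)" by (rule conv_Suc[OF Ylim_conv])
  have c2: "conv (\<lambda>n. Y n (Y n x)) (Ylim (Ylim x))"
  proof (rule conv_comparison)
    show "cnorm (Y n (Y n x) - Ylim (Ylim x)) \<le> cnorm (Y n x - Ylim x) + cnorm (Y n (Ylim x) - Ylim (Ylim x))" for n
    proof -
      have "Y n (Y n x) - Ylim (Ylim x) = Y n (Y n x - Ylim x) + (Y n (Ylim x) - Ylim (Ylim x))"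
        by (simp add: lin_diff[OF Y_lin])
      then have "cnorm (Y n (Y n x) - Ylim (Ylim x)) \<le> cnorm (Y n (Y n x - Ylim x)) + cnorm (Y n (Ylim x) - Ylim (Ylim x))"
        by (simp only: cnorm_triangle)
      then show ?thesis
        using Y_norm1[of n "Y n x - Ylim x"] by linarith
    qed
    show "(\<lambda>n. cnorm (Y n x - Ylim x) + cnorm (Y n (Ylim x) - Ylim (Ylim x))) \<longlonglongrightarrow> 0"
      using tendsto_add[OF Ylim_conv[of x, unfolded conv_def] Ylim_conv[of "Ylim x", unfolded conv_def]] by simp
  qed
  show "conv (\<lambda>n. Y (Suc n) x) (scaleC (1/2) (A x + Ylim (Ylim x)))"
    using conv_scale[OF conv_add[OF conv_const c2], of "1/2" "A x"] by (simp add: Yseq_Suc)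
qed

lemma Y_symm:
  assumes sA: "\<And>x y. cinner (A x) y = cinner x (A y)"
  shows "cinner (Y n x) y = cinner x (Y n y)"
proof (induction n arbitrary: x y)
  case 0 then show ?case by simp
next
  case (Suc n)
  show ?case
    by (simp add: Yseq_Suc cinner_scaleC_left cinner_scaleC_right cinner_add_left cinner_add_right Suc sA)
qed

lemma Ylim_symm:
  assumes sA: "\<And>x y. cinner (A x) y = cinner x (A y)"
  shows "cinner (Ylim x) y = cinner x (Ylim y)"
proof -
  have "(\<lambda>n. cinner (Y n x) y) \<longlonglongrightarrow> cinner (Ylim x) y" by (rule conv_cinner_left[OF Ylim_conv])
  moreover have "(\<lambda>n. cinner (Y n x) y) \<longlonglongrightarrow> cinner x (Ylim y)"
    using conv_cinner_right[OF Ylim_conv, of x y] by (simp add: Y_symm[OF sA])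
  ultimately show ?thesis by (rule LIMSEQ_unique)
qed

lemma Y_comm:
  assumes lC: "lin C" and cA: "\<And>x. C (A x) = A (C x)"
  shows "C (Y n x) = Y n (C x)"
proof (induction n arbitrary: x)
  case 0 then show ?case by (simp add: lin_zero[OF lC])
next
  case (Suc n)
  show ?case by (simp add: Yseq_Suc lin_scale[OF lC] lin_add[OF lC] cA Suc)
qed

lemma Ylim_comm:
  assumes bC: "bounded_op C" and cA: "\<And>x. C (A x) = A (C x)"
  shows "C (Ylim x) = Ylim (C x)"
proof -
  obtain K where K: "\<forall>x. cnorm (C x) \<le> K * cnorm x" using bounded_bound[OF bC] by blast
  have "conv (\<lambda>n. C (Y n x)) (C (Ylim x))"
    by (rule conv_bounded_apply[OF Ylim_conv bounded_lin[OF bC]]) (use K in blast)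
  moreover have "conv (\<lambda>n. C (Y n x)) (Ylim (C x))"
    using Ylim_conv[of "C x"] by (simp add: Y_comm[OF bounded_lin[OF bC] cA])
  ultimately show ?thesis by (rule conv_unique)
qed

end

lemma sqrt_exists:
  fixes A :: "'a::complex_hilbert_space \<Rightarrow> 'a"
  assumes lA: "lin A" and nA: "\<And>x. cnorm (A x) \<le> cnorm x"
    and sA: "\<And>x y. cinner (A x) y = cinner x (A y)"
  shows "\<exists>S. symm S \<and> (\<forall>x. S (S x) = x - A x) \<and>
             (\<forall>C. bounded_op C \<longrightarrow> (\<forall>x. C (A x) = A (C x)) \<longrightarrow> (\<forall>x. C (S x) = S (C x)))"
proof -
  interpret contr_op A by (unfold_locales) (use lA nA in auto)
  define S where "S = (\<lambda>x. x - Ylim x)"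
  have linS: "lin S" using Ylim_lin by (simp add: S_def lin_def scaleC_diff_right algebra_simps)
  have "cnorm (S x) \<le> 2 * cnorm x" for x
    using cnorm_diff_le[of x "Ylim x"] Ylim_norm[of x] by (simp add: S_def)
  then have bS: "bounded_op S" by (intro bounded_opI[OF linS])
  have "cinner (S x) y = cinner x (S y)" for x y
    by (simp add: S_def cinner_diff_left cinner_diff_right Ylim_symm[OF sA])
  then have "symm S" using bS by (simp add: symm_def)
  moreover have "S (S x) = x - A x" for x
  proof -
    have e: "Ylim x + Ylim x = A x + Ylim (Ylim x)"
      using Ylim_eq[of x] scaleC_half_double[of "A x + Ylim (Ylim x)"] by simp
    have "S (S x) = x - (Ylim x + Ylim x) + Ylim (Ylim x)"
      by (simp add: S_def lin_diff[OF Ylim_lin] algebra_simps)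
    then show ?thesis using e by (simp add: algebra_simps)
  qed
  moreover have "C (S x) = S (C x)" if "bounded_op C" "\<forall>x. C (A x) = A (C x)" for C x
    using that by (simp add: S_def lin_diff[OF bounded_lin] Ylim_comm)
  ultimately show ?thesis by blast
qed



definition Fp :: "(nat \<Rightarrow> 'a \<Rightarrow> 'a) \<Rightarrow> (nat \<Rightarrow> 'a \<Rightarrow> 'a) \<Rightarrow> nat list \<Rightarrow> ('a::complex_hilbert_space \<Rightarrow> 'a)" where
  "Fp p n L = foldr (\<circ>) (map (\<lambda>i. op_diff (p i \<circ> p i) (n i \<circ> n i)) L) id"

definition Fs :: "(nat \<Rightarrow> 'a \<Rightarrow> 'a) \<Rightarrow> (nat \<Rightarrow> 'a \<Rightarrow> 'a) \<Rightarrow> nat list \<Rightarrow> ('a::complex_hilbert_space \<Rightarrow> 'a)" where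
  "Fs p n L = foldr (\<circ>) (map (\<lambda>i. op_add (p i \<circ> p i) (n i \<circ> n i)) L) id"

lemma Fp_Nil[simp]: "Fp p n [] = id" and Fp_Cons[simp]: "Fp p n (i # L) = op_diff (p i \<circ> p i) (n i \<circ> n i) \<circ> Fp p n L"
  by (simp_all add: Fp_def)

lemma Fs_Nil[simp]: "Fs p n [] = id" and Fs_Cons[simp]: "Fs p n (i # L) = op_add (p i \<circ> p i) (n i \<circ> n i) \<circ> Fs p n L"
  by (simp_all add: Fs_def)

lemma state_diff:
  assumes "is_state J \<tau>" "J = commutant Q" "Q \<subseteq> BH" "X \<in> J" "Y \<in> J"
  shows "\<tau> (op_diff X Y) = \<tau> X - \<tau> Y"
proof -
  have "op_scale (-1) Y \<in> J" using assms commutant_scale by blast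
  then have "\<tau> (op_add X (op_scale (-1) Y)) = \<tau> X + \<tau> (op_scale (-1) Y)"
    using assms unfolding is_state_def by blast
  also have "\<tau> (op_scale (-1) Y) = - \<tau> Y" using assms unfolding is_state_def by simp
  finally show ?thesis by (simp add: op_diff_eq)
qed

lemma state_add:
  assumes "is_state J \<tau>" "X \<in> J" "Y \<in> J"
  shows "\<tau> (op_add X Y) = \<tau> X + \<tau> Y"
  using assms unfolding is_state_def by blast

lemma state_sq:
  assumes "is_state J \<tau>" "W \<in> J" "symm W"
  shows "Im (\<tau> (W \<circ> W)) = 0 \<and> 0 \<le> Re (\<tau> (W \<circ> W))"
proof -
  have "\<forall>T\<in>J. Im (\<tau> (adj T \<circ> T)) = 0 \<and> 0 \<le> Re (\<tau> (adj T \<circ> T))"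
    using assms(1) unfolding is_state_def by blast
  from bspec[OF this assms(2)] show ?thesis using adj_symm[OF assms(3)] by simp
qed

locale key_ctx =
  fixes J :: "('a::complex_hilbert_space \<Rightarrow> 'a) set" and Q and \<tau> and p n :: "nat \<Rightarrow> 'a \<Rightarrow> 'a"
  assumes st: "is_state J \<tau>" and JQ: "J = commutant Q" and QB: "Q \<subseteq> BH"
begin

definition good :: "nat list \<Rightarrow> bool" where
  "good L \<longleftrightarrow> (\<forall>i\<in>set L. p i \<in> J \<and> n i \<in> J \<and> symm (p i) \<and> symm (n i)) \<and>
     (\<forall>i\<in>set L. \<forall>j\<in>set L. p i \<circ> p j = p j \<circ> p i \<and> p i \<circ> n j = n j \<circ> p i \<and> n i \<circ> n j = n j \<circ> n i)"

lemma good_Cons: "good (i # L) \<Longrightarrow> good L"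
  unfolding good_def by auto

lemma J_comp: "S \<in> J \<Longrightarrow> T \<in> J \<Longrightarrow> S \<circ> T \<in> J"
  using JQ commutant_comp by blast
lemma J_add: "S \<in> J \<Longrightarrow> T \<in> J \<Longrightarrow> op_add S T \<in> J"
  using JQ QB commutant_add by blast
lemma J_diff: "S \<in> J \<Longrightarrow> T \<in> J \<Longrightarrow> op_diff S T \<in> J"
  using JQ QB commutant_diff by blast
lemma J_id: "id \<in> J"
  using JQ commutant_id by blast

lemma Fp_in: "good L \<Longrightarrow> Fp p n L \<in> J"
proof (induction L)
  case Nil show ?case unfolding Fp_Nil Fs_Nil by (rule J_id)
next
  case (Cons i L)
  have "p i \<in> J" "n i \<in> J" using Cons.prems by (simp_all add: good_def)
  moreover have "Fp p n L \<in> J" using Cons.IH good_Cons[OF Cons.prems] by blast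
  ultimately show ?case unfolding Fp_Cons by (intro J_comp J_diff)
qed

lemma Fs_in: "good L \<Longrightarrow> Fs p n L \<in> J"
proof (induction L)
  case Nil show ?case unfolding Fp_Nil Fs_Nil by (rule J_id)
next
  case (Cons i L)
  have "p i \<in> J" "n i \<in> J" using Cons.prems by (simp_all add: good_def)
  moreover have "Fs p n L \<in> J" using Cons.IH good_Cons[OF Cons.prems] by blast
  ultimately show ?case unfolding Fs_Cons by (intro J_comp J_add)
qed

lemma comm_apply: "S \<circ> T = T \<circ> S \<Longrightarrow> S (T x) = T (S x)"
  by (simp add: fun_eq_iff)

lemma comm_comp:
  assumes "V \<circ> X = X \<circ> V" "W \<circ> X = X \<circ> W" shows "(W \<circ> V) \<circ> X = X \<circ> (W \<circ> V)"
proof -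
  have "(W \<circ> V) \<circ> X = W \<circ> (V \<circ> X)" by (rule comp_assoc)
  also have "\<dots> = W \<circ> (X \<circ> V)" using assms(1) by (rule arg_cong)
  also have "\<dots> = (W \<circ> X) \<circ> V" by (rule comp_assoc[symmetric])
  also have "\<dots> = (X \<circ> W) \<circ> V" using assms(2) by (rule arg_cong[where f="\<lambda>z. z \<circ> V"])
  also have "\<dots> = X \<circ> (W \<circ> V)" by (rule comp_assoc)
  finally show ?thesis .
qed

lemma F_comm:
  assumes "lin C" "\<forall>i\<in>set L. C \<circ> p i = p i \<circ> C \<and> C \<circ> n i = n i \<circ> C"
  shows "C (Fp p n L x) = Fp p n L (C x) \<and> C (Fs p n L x) = Fs p n L (C x)"
  using assms(2)
proof (induction L arbitrary: x)
  case Nil then show ?case by simp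
next
  case (Cons i L)
  have ci: "C \<circ> p i = p i \<circ> C \<and> C \<circ> n i = n i \<circ> C" by (rule bspec[OF Cons.prems]) simp
  note c1 = conjunct1[OF ci] and c2 = conjunct2[OF ci]
  have cp: "C (p i y) = p i (C y)" and cn: "C (n i y) = n i (C y)" for y
    using comm_apply[OF c1] comm_apply[OF c2] by auto
  have IH: "C (Fp p n L y) = Fp p n L (C y)" "C (Fs p n L y) = Fs p n L (C y)" for y
    using Cons by auto
  show ?case
    by (simp add: op_diff_def op_add_def lin_diff[OF assms(1)] lin_add[OF assms(1)] cp cn IH)
qed

lemma key:
  assumes "good L" "W \<in> J" "symm W" "\<forall>i\<in>set L. W \<circ> p i = p i \<circ> W \<and> W \<circ> n i = n i \<circ> W"
  shows "cmod (\<tau> (W \<circ> Fp p n L \<circ> W)) \<le> Re (\<tau> (W \<circ> Fs p n L \<circ> W)) \<and> Im (\<tau> (W \<circ> Fs p n L \<circ> W)) = 0"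
  using assms
proof (induction L arbitrary: W)
  case Nil
  have s: "Im (\<tau> (W \<circ> W)) = 0 \<and> 0 \<le> Re (\<tau> (W \<circ> W))" by (rule state_sq[OF st Nil(2,3)])
  have e: "W \<circ> Fp p n [] \<circ> W = W \<circ> W" "W \<circ> Fs p n [] \<circ> W = W \<circ> W"
    by (simp_all only: Fp_Nil Fs_Nil comp_id)
  show ?case unfolding e using s cmod_eq_Re[of "\<tau> (W \<circ> W)"] by linarith
next
  case (Cons i L)
  define P where "P = p i"
  define N where "N = n i"
  have gL: "good L" using Cons.prems(1) by (rule good_Cons)
  have PJ: "P \<in> J" and NJ: "N \<in> J" and sP: "symm P" and sN: "symm N"
    using Cons.prems(1) by (auto simp: good_def P_def N_def)
  have wi: "W \<circ> P = P \<circ> W \<and> W \<circ> N = N \<circ> W" unfolding P_def N_def by (rule bspec[OF Cons.prems(4)]) simp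
  note WP = conjunct1[OF wi] and WN = conjunct2[OF wi]
  have linW: "lin W" using Cons.prems(3) by (simp add: symm_def bounded_lin)
  have linP: "lin P" using sP by (simp add: symm_def bounded_lin)
  have linN: "lin N" using sN by (simp add: symm_def bounded_lin)
  have cc: "\<forall>a\<in>set (i#L). \<forall>b\<in>set (i#L). p a \<circ> p b = p b \<circ> p a \<and> p a \<circ> n b = n b \<circ> p a \<and> n a \<circ> n b = n b \<circ> n a"
    using Cons.prems(1) unfolding good_def by blast
  have cPj: "\<forall>j\<in>set L. P \<circ> p j = p j \<circ> P \<and> P \<circ> n j = n j \<circ> P"
  proof
    fix j assume j: "j \<in> set L"
    have hi: "i \<in> set (i#L)" and hj: "j \<in> set (i#L)" using j by auto
    from bspec[OF bspec[OF cc hi] hj] show "P \<circ> p j = p j \<circ> P \<and> P \<circ> n j = n j \<circ> P"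
      unfolding P_def by blast
  qed
  have cNj: "\<forall>j\<in>set L. N \<circ> p j = p j \<circ> N \<and> N \<circ> n j = n j \<circ> N"
  proof
    fix j assume j: "j \<in> set L"
    have hi: "i \<in> set (i#L)" and hj: "j \<in> set (i#L)" using j by auto
    have g1: "p j \<circ> n i = n i \<circ> p j" using bspec[OF bspec[OF cc hj] hi] by blast
    have g2: "n i \<circ> n j = n j \<circ> n i" using bspec[OF bspec[OF cc hi] hj] by blast
    show "N \<circ> p j = p j \<circ> N \<and> N \<circ> n j = n j \<circ> N"
      unfolding N_def using g1[symmetric] g2 by (rule conjI)
  qed
  have FP: "\<And>x. P (Fp p n L x) = Fp p n L (P x)" "\<And>x. P (Fs p n L x) = Fs p n L (P x)"
    using F_comm[OF linP cPj] by auto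
  have FN: "\<And>x. N (Fp p n L x) = Fp p n L (N x)" "\<And>x. N (Fs p n L x) = Fs p n L (N x)"
    using F_comm[OF linN cNj] by auto
  have WPx: "W (P x) = P (W x)" and WNx: "W (N x) = N (W x)" for x
    using WP WN by (simp_all add: comm_apply)
  have good_W: "W \<circ> V \<in> J \<and> symm (W \<circ> V) \<and> (\<forall>j\<in>set L. (W \<circ> V) \<circ> p j = p j \<circ> (W \<circ> V) \<and> (W \<circ> V) \<circ> n j = n j \<circ> (W \<circ> V))"
    if V: "V \<in> J" "symm V" "W \<circ> V = V \<circ> W" "\<forall>j\<in>set L. V \<circ> p j = p j \<circ> V \<and> V \<circ> n j = n j \<circ> V" for V
  proof -
    have "W \<circ> V \<in> J" using J_comp Cons.prems(2) V(1) by blast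
    moreover have "symm (W \<circ> V)" by (rule symm_comp[OF Cons.prems(3) V(2,3)])
    moreover have "\<forall>j\<in>set L. (W \<circ> V) \<circ> p j = p j \<circ> (W \<circ> V) \<and> (W \<circ> V) \<circ> n j = n j \<circ> (W \<circ> V)"
    proof
      fix j assume j: "j \<in> set L"
      have hj: "j \<in> set (i#L)" using j by simp
      have v: "V \<circ> p j = p j \<circ> V \<and> V \<circ> n j = n j \<circ> V" by (rule bspec[OF V(4) j])
      have w: "W \<circ> p j = p j \<circ> W \<and> W \<circ> n j = n j \<circ> W" by (rule bspec[OF Cons.prems(4) hj])
      show "(W \<circ> V) \<circ> p j = p j \<circ> (W \<circ> V) \<and> (W \<circ> V) \<circ> n j = n j \<circ> (W \<circ> V)"
        using comm_comp[OF conjunct1[OF v] conjunct1[OF w]] comm_comp[OF conjunct2[OF v] conjunct2[OF w]]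
        by (rule conjI)
    qed
    ultimately show ?thesis by blast
  qed
  have gP: "W \<circ> P \<in> J" "symm (W \<circ> P)" "\<forall>j\<in>set L. (W \<circ> P) \<circ> p j = p j \<circ> (W \<circ> P) \<and> (W \<circ> P) \<circ> n j = n j \<circ> (W \<circ> P)"
    using good_W[OF PJ sP WP cPj] by auto
  have gN: "W \<circ> N \<in> J" "symm (W \<circ> N)" "\<forall>j\<in>set L. (W \<circ> N) \<circ> p j = p j \<circ> (W \<circ> N) \<and> (W \<circ> N) \<circ> n j = n j \<circ> (W \<circ> N)"
    using good_W[OF NJ sN WN cNj] by auto
  have IHP: "cmod (\<tau> ((W \<circ> P) \<circ> Fp p n L \<circ> (W \<circ> P))) \<le> Re (\<tau> ((W \<circ> P) \<circ> Fs p n L \<circ> (W \<circ> P))) \<and> Im (\<tau> ((W \<circ> P) \<circ> Fs p n L \<circ> (W \<circ> P))) = 0"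
    by (rule Cons.IH[OF gL gP])
  have IHN: "cmod (\<tau> ((W \<circ> N) \<circ> Fp p n L \<circ> (W \<circ> N))) \<le> Re (\<tau> ((W \<circ> N) \<circ> Fs p n L \<circ> (W \<circ> N))) \<and> Im (\<tau> ((W \<circ> N) \<circ> Fs p n L \<circ> (W \<circ> N))) = 0"
    by (rule Cons.IH[OF gL gN])
  have FpJ: "Fp p n L \<in> J" and FsJ: "Fs p n L \<in> J" using gL Fp_in Fs_in by auto
  have in1: "(W \<circ> P) \<circ> Fp p n L \<circ> (W \<circ> P) \<in> J" "(W \<circ> N) \<circ> Fp p n L \<circ> (W \<circ> N) \<in> J"
    "(W \<circ> P) \<circ> Fs p n L \<circ> (W \<circ> P) \<in> J" "(W \<circ> N) \<circ> Fs p n L \<circ> (W \<circ> N) \<in> J"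
    using gP(1) gN(1) FpJ FsJ J_comp by blast+
  have eqp: "W \<circ> Fp p n (i # L) \<circ> W = op_diff ((W \<circ> P) \<circ> Fp p n L \<circ> (W \<circ> P)) ((W \<circ> N) \<circ> Fp p n L \<circ> (W \<circ> N))"
    by (simp add: fun_eq_iff op_diff_def lin_diff[OF linW] P_def[symmetric] N_def[symmetric] FP FN WPx WNx)
  have eqs: "W \<circ> Fs p n (i # L) \<circ> W = op_add ((W \<circ> P) \<circ> Fs p n L \<circ> (W \<circ> P)) ((W \<circ> N) \<circ> Fs p n L \<circ> (W \<circ> N))"
    by (simp add: fun_eq_iff op_add_def lin_add[OF linW] P_def[symmetric] N_def[symmetric] FP FN WPx WNx)
  have tp: "\<tau> (W \<circ> Fp p n (i # L) \<circ> W) = \<tau> ((W \<circ> P) \<circ> Fp p n L \<circ> (W \<circ> P)) - \<tau> ((W \<circ> N) \<circ> Fp p n L \<circ> (W \<circ> N))"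
    unfolding eqp by (rule state_diff[OF st JQ QB in1(1,2)])
  have ts: "\<tau> (W \<circ> Fs p n (i # L) \<circ> W) = \<tau> ((W \<circ> P) \<circ> Fs p n L \<circ> (W \<circ> P)) + \<tau> ((W \<circ> N) \<circ> Fs p n L \<circ> (W \<circ> N))"
    unfolding eqs by (rule state_add[OF st in1(3,4)])
  show ?case
  proof -
    let ?a = "\<tau> ((W \<circ> P) \<circ> Fp p n L \<circ> (W \<circ> P))" and ?b = "\<tau> ((W \<circ> N) \<circ> Fp p n L \<circ> (W \<circ> N))"
    let ?c = "\<tau> ((W \<circ> P) \<circ> Fs p n L \<circ> (W \<circ> P))" and ?d = "\<tau> ((W \<circ> N) \<circ> Fs p n L \<circ> (W \<circ> N))"
    have "cmod (?a - ?b) \<le> cmod ?a + cmod ?b" by (rule norm_triangle_ineq4)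
    then have "cmod (?a - ?b) \<le> Re (?c + ?d)" using IHP IHN by simp
    moreover have "Im (?c + ?d) = 0" using IHP IHN by simp
    ultimately show ?thesis unfolding tp ts by blast
  qed
qed

end



lemma halfsum: "scaleC (1/2) (x::'a::complex_inner_space) + scaleC (1/2) x = x"
  by (rule scaleC_half_double)

lemma vL1: "(x::'a::complex_inner_space) - scaleC (of_real (-1)) (scaleC (of_real 0) x + y) = x + y"
  by (simp add: scaleC_minus1)

lemma vL2: "(x::'a::complex_inner_space) - scaleC (of_real 1) (scaleC (of_real 0) x + y) = x - y"
  by (simp add: scaleC_one)

lemma vL3: "(x::'a::complex_inner_space) - scaleC (of_real (-1/2)) (scaleC (of_real (-1)) x + y) = scaleC (1/2) (x + y)"
proof -
  have "scaleC (of_real (-1/2)) (scaleC (of_real (-1)) x + y) = - (scaleC (1/2) (- x + y))"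
    by (simp add: scaleC_minus1 scaleC_minus_left[symmetric])
  also have "\<dots> = scaleC (1/2) x - scaleC (1/2) y"
    by (simp add: scaleC_add_right scaleC_minus_right scaleC_diff_right)
  finally have e: "scaleC (of_real (-1/2)) (scaleC (of_real (-1)) x + y) = scaleC (1/2) x - scaleC (1/2) y" .
  have "x - (scaleC (1/2) x - scaleC (1/2) y) = (scaleC (1/2) x + scaleC (1/2) x) - (scaleC (1/2) x - scaleC (1/2) y)"
    using halfsum[of x] by simp
  also have "\<dots> = scaleC (1/2) x + scaleC (1/2) y" by (simp add: algebra_simps)
  finally have "x - (scaleC (1/2) x - scaleC (1/2) y) = scaleC (1/2) x + scaleC (1/2) y" .
  then show ?thesis unfolding e by (simp add: scaleC_add_right)
qed

lemma vL4: "(x::'a::complex_inner_space) - scaleC (of_real (1/2)) (scaleC (of_real 1) x + y) = scaleC (1/2) (x - y)"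
proof -
  have e: "scaleC (of_real (1/2)) (scaleC (of_real 1) x + y) = scaleC (1/2) x + scaleC (1/2) y"
    by (simp add: scaleC_one scaleC_add_right)
  have "x - (scaleC (1/2) x + scaleC (1/2) y) = (scaleC (1/2) x + scaleC (1/2) x) - (scaleC (1/2) x + scaleC (1/2) y)"
    using halfsum[of x] by simp
  also have "\<dots> = scaleC (1/2) x - scaleC (1/2) y" by (simp add: algebra_simps)
  finally have "x - (scaleC (1/2) x + scaleC (1/2) y) = scaleC (1/2) x - scaleC (1/2) y" .
  then show ?thesis unfolding e by (simp add: scaleC_diff_right)
qed

lemma vL5: "scaleC (1/2) ((x::'a::complex_inner_space) + y) - scaleC (1/2) (x - y) = y"
  using halfsum[of y] by (simp add: scaleC_add_right scaleC_diff_right algebra_simps)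

lemma vL6: "scaleC (1/2) ((x::'a::complex_inner_space) + y) + scaleC (1/2) (x - y) = x"
  using halfsum[of x] by (simp add: scaleC_add_right scaleC_diff_right algebra_simps)

definition rt :: "('a::complex_hilbert_space \<Rightarrow> 'a) \<Rightarrow> real \<Rightarrow> real \<Rightarrow> ('a \<Rightarrow> 'a)" where
  "rt a c d = (SOME S. symm S \<and> (\<forall>x. S (S x) = x - scaleC (of_real c) (scaleC (of_real d) x + a x)) \<and>
      (\<forall>C. bounded_op C \<longrightarrow> (\<forall>x. C (a x) = a (C x)) \<longrightarrow> (\<forall>x. C (S x) = S (C x))))"

lemma rt_spec:
  fixes a :: "'a::complex_hilbert_space \<Rightarrow> 'a"
  assumes sa: "symm a" and na: "\<And>x. cnorm (a x) \<le> cnorm x" and cd: "\<bar>c\<bar> * (\<bar>d\<bar> + 1) \<le> 1"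
  shows "symm (rt a c d) \<and> (\<forall>x. rt a c d (rt a c d x) = x - scaleC (of_real c) (scaleC (of_real d) x + a x)) \<and>
      (\<forall>C. bounded_op C \<longrightarrow> (\<forall>x. C (a x) = a (C x)) \<longrightarrow> (\<forall>x. C (rt a c d x) = rt a c d (C x)))"
proof -
  define A where "A = (\<lambda>x. scaleC (of_real c) (scaleC (of_real d) x + a x))"
  have la: "lin a" using sa by (simp add: symm_def bounded_lin)
  have lA: "lin A" using la
    by (simp add: A_def lin_def scaleC_add_right scaleC_scaleC mult.commute algebra_simps)
  have nA: "cnorm (A x) \<le> cnorm x" for x
  proof -
    have "cnorm (A x) = \<bar>c\<bar> * cnorm (scaleC (of_real d) x + a x)" by (simp add: A_def cnorm_scaleC)
    also have "\<dots> \<le> \<bar>c\<bar> * (\<bar>d\<bar> * cnorm x + cnorm x)"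
      using cnorm_triangle[of "scaleC (of_real d) x" "a x"] na[of x]
      by (intro mult_left_mono) (auto simp: cnorm_scaleC)
    also have "\<dots> = (\<bar>c\<bar> * (\<bar>d\<bar> + 1)) * cnorm x" by (simp add: algebra_simps)
    also have "\<dots> \<le> 1 * cnorm x" by (rule mult_right_mono[OF cd]) simp
    finally show ?thesis by simp
  qed
  have sA: "cinner (A x) y = cinner x (A y)" for x y
    using sa by (simp add: A_def cinner_scaleC_left cinner_scaleC_right cinner_add_left cinner_add_right symm_def)
  obtain S where S: "symm S" "\<forall>x. S (S x) = x - A x"
    "\<forall>C. bounded_op C \<longrightarrow> (\<forall>x. C (A x) = A (C x)) \<longrightarrow> (\<forall>x. C (S x) = S (C x))"
    using sqrt_exists[OF lA nA sA] by blast
  have S3: "\<forall>C. bounded_op C \<longrightarrow> (\<forall>x. C (a x) = a (C x)) \<longrightarrow> (\<forall>x. C (S x) = S (C x))"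
  proof (intro allI impI)
    fix C :: "'a \<Rightarrow> 'a" and x assume bC: "bounded_op C" and ca: "\<forall>x. C (a x) = a (C x)"
    have "\<forall>x. C (A x) = A (C x)"
      using ca bounded_lin[OF bC] by (simp add: A_def lin_add lin_scale)
    then show "C (S x) = S (C x)" using S(3) bC by blast
  qed
  have ex: "\<exists>S. symm S \<and> (\<forall>x. S (S x) = x - scaleC (of_real c) (scaleC (of_real d) x + a x)) \<and>
      (\<forall>C. bounded_op C \<longrightarrow> (\<forall>x. C (a x) = a (C x)) \<longrightarrow> (\<forall>x. C (S x) = S (C x)))"
    using S(1,2) S3 unfolding A_def by blast
  show ?thesis unfolding rt_def by (rule someI_ex[OF ex])
qed

lemma vn_eq: "von_neumann_algebra M \<Longrightarrow> commutant (commutant M) = M"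
  by (simp add: von_neumann_algebra_def)

lemma vn_BH: "von_neumann_algebra M \<Longrightarrow> M \<subseteq> BH"
  by (simp add: von_neumann_algebra_def)

lemma vn_comp: "von_neumann_algebra M \<Longrightarrow> S \<in> M \<Longrightarrow> T \<in> M \<Longrightarrow> S \<circ> T \<in> M"
  by (metis commutant_comp vn_eq)

lemma vn_add: "von_neumann_algebra M \<Longrightarrow> S \<in> M \<Longrightarrow> T \<in> M \<Longrightarrow> op_add S T \<in> M"
  by (metis commutant_add commutant_BH vn_eq)

lemma vn_diff: "von_neumann_algebra M \<Longrightarrow> S \<in> M \<Longrightarrow> T \<in> M \<Longrightarrow> op_diff S T \<in> M"
  by (metis commutant_diff commutant_BH vn_eq)

lemma vn_id: "von_neumann_algebra M \<Longrightarrow> id \<in> M"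
  by (metis commutant_id vn_eq)

lemma vn_rt:
  assumes vn: "von_neumann_algebra M" and aM: "a \<in> M" and sa: "symm a"
    and na: "\<And>x. cnorm (a x) \<le> cnorm x" and cd: "\<bar>c\<bar> * (\<bar>d\<bar> + 1) \<le> 1"
  shows "rt a c d \<in> M"
proof -
  note R = rt_spec[OF sa na cd]
  have bR: "rt a c d \<in> BH" using R by (simp add: BH_def symm_def)
  have cR: "\<forall>C\<in>commutant M. rt a c d \<circ> C = C \<circ> rt a c d"
  proof
    fix C assume C: "C \<in> commutant M"
    then have bC: "bounded_op C" and "C \<circ> a = a \<circ> C" using aM by (auto simp: commutant_def BH_def)
    then have "\<forall>x. C (a x) = a (C x)" by (simp add: fun_eq_iff)
    then have "\<forall>x. C (rt a c d x) = rt a c d (C x)" using R bC by blast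
    then show "rt a c d \<circ> C = C \<circ> rt a c d" by (simp add: fun_eq_iff)
  qed
  have "rt a c d \<in> commutant (commutant M)"
    unfolding commutant_def[of "commutant M"] mem_Collect_eq using bR cR by blast
  then show ?thesis using vn_eq[OF vn] by simp
qed



section \<open>Party-level decompositions\<close>

lemma comm_pt: "S \<circ> T = T \<circ> S \<Longrightarrow> S (T x) = T (S x)"
  by (simp add: fun_eq_iff)

lemma abelian_comm: "abelian M \<Longrightarrow> S \<in> M \<Longrightarrow> T \<in> M \<Longrightarrow> S (T x) = T (S x)"
  unfolding abelian_def by (metis comp_apply)

lemma abelian_comm': "abelian M \<Longrightarrow> S \<in> M \<Longrightarrow> T \<in> M \<Longrightarrow> S \<circ> T = T \<circ> S"
  unfolding abelian_def by blast

definition "pR a0 a1 = rt a0 (-1) 0 \<circ> rt a1 (-1/2) (-1)"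
definition "nR a0 a1 = rt a0 1 0 \<circ> rt a1 (1/2) 1"
definition "pR' a0 a1 = rt a0 (-1) 0 \<circ> rt a1 (1/2) 1"
definition "nR' a0 a1 = rt a0 1 0 \<circ> rt a1 (-1/2) (-1)"
definition "pX a = rt a (-1/2) (-1)"
definition "nX a = rt a (1/2) 1"

locale party =
  fixes M :: "('a::complex_hilbert_space \<Rightarrow> 'a) set" and a0 a1 :: "'a \<Rightarrow> 'a"
  assumes vn: "von_neumann_algebra M" and a0M: "a0 \<in> M" and a1M: "a1 \<in> M"
    and s0: "symm a0" and s1: "symm a1"
    and n0: "\<And>x. cnorm (a0 x) \<le> cnorm x" and n1: "\<And>x. cnorm (a1 x) \<le> cnorm x"
begin

abbreviation "u \<equiv> rt a0 (-1) 0"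
abbreviation "v \<equiv> rt a0 1 0"
abbreviation "hp \<equiv> rt a1 (-1/2) (-1)"
abbreviation "hn \<equiv> rt a1 (1/2) 1"
abbreviation "gp \<equiv> rt a0 (-1/2) (-1)"
abbreviation "gn \<equiv> rt a0 (1/2) 1"

lemma l0: "lin a0" using s0 by (simp add: symm_def bounded_lin)

lemma su: "symm u \<and> (\<forall>x. u (u x) = x + a0 x)"
  using rt_spec[OF s0 n0, of "-1" 0] vL1[where 'a='a] by simp
lemma sv: "symm v \<and> (\<forall>x. v (v x) = x - a0 x)"
  using rt_spec[OF s0 n0, of 1 0] vL2[where 'a='a] by simp
lemma shp: "symm hp \<and> (\<forall>x. hp (hp x) = scaleC (1/2) (x + a1 x))"
  using rt_spec[OF s1 n1, of "-1/2" "-1"] vL3[where 'a='a] by simp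
lemma shn: "symm hn \<and> (\<forall>x. hn (hn x) = scaleC (1/2) (x - a1 x))"
  using rt_spec[OF s1 n1, of "1/2" 1] vL4[where 'a='a] by simp
lemma sgp: "symm gp \<and> (\<forall>x. gp (gp x) = scaleC (1/2) (x + a0 x))"
  using rt_spec[OF s0 n0, of "-1/2" "-1"] vL3[where 'a='a] by simp
lemma sgn: "symm gn \<and> (\<forall>x. gn (gn x) = scaleC (1/2) (x - a0 x))"
  using rt_spec[OF s0 n0, of "1/2" 1] vL4[where 'a='a] by simp

lemma inM: "u \<in> M" "v \<in> M" "hp \<in> M" "hn \<in> M" "gp \<in> M" "gn \<in> M"
  by (rule vn_rt[OF vn a0M s0 n0] vn_rt[OF vn a1M s1 n1]; simp)+

lemma X_party:
  "pX a0 \<in> M \<and> nX a0 \<in> M \<and> symm (pX a0) \<and> symm (nX a0) \<and> pX a0 \<circ> nX a0 = nX a0 \<circ> pX a0 \<and>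
   op_diff (pX a0 \<circ> pX a0) (nX a0 \<circ> nX a0) = a0 \<and> op_add (pX a0 \<circ> pX a0) (nX a0 \<circ> nX a0) = id"
proof -
  have bgp: "bounded_op gp" using sgp by (simp add: symm_def)
  have ca: "\<forall>x. gp (a0 x) = a0 (gp x)"
  proof -
    have bA: "bounded_op a0" using s0 by (simp add: symm_def)
    have "\<forall>C. bounded_op C \<longrightarrow> (\<forall>x. C (a0 x) = a0 (C x)) \<longrightarrow> (\<forall>x. C (gp x) = gp (C x))"
      using rt_spec[OF s0 n0, of "-1/2" "-1"] by simp
    then show ?thesis using bA by (metis)
  qed
  have "\<forall>C. bounded_op C \<longrightarrow> (\<forall>x. C (a0 x) = a0 (C x)) \<longrightarrow> (\<forall>x. C (gn x) = gn (C x))"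
    using rt_spec[OF s0 n0, of "1/2" 1] by simp
  then have cm: "\<forall>x. gp (gn x) = gn (gp x)" using bgp ca by blast
  have e1: "op_diff (gp \<circ> gp) (gn \<circ> gn) = a0"
    using sgp sgn by (simp add: fun_eq_iff op_diff_def vL5)
  have e2: "op_add (gp \<circ> gp) (gn \<circ> gn) = id"
    using sgp sgn by (simp add: fun_eq_iff op_add_def vL6)
  show ?thesis using inM sgp sgn cm e1 e2 by (simp add: pX_def nX_def fun_eq_iff)
qed

end

locale apart = party +
  assumes ab: "abelian M"
begin

lemma cm: "S \<in> M \<Longrightarrow> T \<in> M \<Longrightarrow> S (T x) = T (S x)" by (rule abelian_comm[OF ab])

lemma sq_comp:
  assumes "S \<in> M" "T \<in> M" shows "(S \<circ> T) ((S \<circ> T) x) = S (S (T (T x)))"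
  using cm[OF assms(2,1)] by simp

lemma R_party:
  "pR a0 a1 \<in> M \<and> nR a0 a1 \<in> M \<and> symm (pR a0 a1) \<and> symm (nR a0 a1) \<and> pR a0 a1 \<circ> nR a0 a1 = nR a0 a1 \<circ> pR a0 a1 \<and>
   op_diff (pR a0 a1 \<circ> pR a0 a1) (nR a0 a1 \<circ> nR a0 a1) = op_add a0 a1 \<and>
   op_add (pR a0 a1 \<circ> pR a0 a1) (nR a0 a1 \<circ> nR a0 a1) = op_add id (a0 \<circ> a1)"
proof -
  have pM: "pR a0 a1 \<in> M" and nM: "nR a0 a1 \<in> M" unfolding pR_def nR_def using inM vn_comp[OF vn] by auto
  have sp: "symm (pR a0 a1)" unfolding pR_def
    by (rule symm_comp) (use su shp abelian_comm'[OF ab inM(1) inM(3)] in auto)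
  have sn: "symm (nR a0 a1)" unfolding nR_def
    by (rule symm_comp) (use sv shn abelian_comm'[OF ab inM(2) inM(4)] in auto)
  have c: "pR a0 a1 \<circ> nR a0 a1 = nR a0 a1 \<circ> pR a0 a1" by (rule abelian_comm'[OF ab pM nM])
  define T where "T x = scaleC (1/2) (x + a1 x)" for x
  define T' where "T' x = scaleC (1/2) (x - a1 x)" for x
  have pp: "pR a0 a1 (pR a0 a1 x) = T x + a0 (T x)" for x
    unfolding pR_def using sq_comp[OF inM(1) inM(3), of x] su shp by (simp add: T_def)
  have nn: "nR a0 a1 (nR a0 a1 x) = T' x - a0 (T' x)" for x
    unfolding nR_def using sq_comp[OF inM(2) inM(4), of x] sv shn by (simp add: T'_def)
  have d: "T x - T' x = a1 x" and s: "T x + T' x = x" for x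
    unfolding T_def T'_def by (rule vL5, rule vL6)
  have e1: "op_diff (pR a0 a1 \<circ> pR a0 a1) (nR a0 a1 \<circ> nR a0 a1) = op_add a0 a1"
  proof -
    have "T x + a0 (T x) - (T' x - a0 (T' x)) = (T x - T' x) + (a0 (T x) + a0 (T' x))" for x
      by (simp add: algebra_simps)
    then show ?thesis using d s by (simp add: fun_eq_iff op_diff_def op_add_def pp nn lin_add[OF l0, symmetric])
  qed
  have e2: "op_add (pR a0 a1 \<circ> pR a0 a1) (nR a0 a1 \<circ> nR a0 a1) = op_add id (a0 \<circ> a1)"
  proof -
    have "T x + a0 (T x) + (T' x - a0 (T' x)) = (T x + T' x) + (a0 (T x) - a0 (T' x))" for x
      by (simp add: algebra_simps)
    then show ?thesis using d s by (simp add: fun_eq_iff op_add_def pp nn lin_diff[OF l0, symmetric])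
  qed
  show ?thesis using pM nM sp sn c e1 e2 by blast
qed

lemma R_party':
  "pR' a0 a1 \<in> M \<and> nR' a0 a1 \<in> M \<and> symm (pR' a0 a1) \<and> symm (nR' a0 a1) \<and> pR' a0 a1 \<circ> nR' a0 a1 = nR' a0 a1 \<circ> pR' a0 a1 \<and>
   op_diff (pR' a0 a1 \<circ> pR' a0 a1) (nR' a0 a1 \<circ> nR' a0 a1) = op_diff a0 a1 \<and>
   op_add (pR' a0 a1 \<circ> pR' a0 a1) (nR' a0 a1 \<circ> nR' a0 a1) = op_diff id (a0 \<circ> a1)"
proof -
  have pM: "pR' a0 a1 \<in> M" and nM: "nR' a0 a1 \<in> M" unfolding pR'_def nR'_def using inM vn_comp[OF vn] by auto
  have sp: "symm (pR' a0 a1)" unfolding pR'_def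
    by (rule symm_comp) (use su shn abelian_comm'[OF ab inM(1) inM(4)] in auto)
  have sn: "symm (nR' a0 a1)" unfolding nR'_def
    by (rule symm_comp) (use sv shp abelian_comm'[OF ab inM(2) inM(3)] in auto)
  have c: "pR' a0 a1 \<circ> nR' a0 a1 = nR' a0 a1 \<circ> pR' a0 a1" by (rule abelian_comm'[OF ab pM nM])
  define T where "T x = scaleC (1/2) (x + a1 x)" for x
  define T' where "T' x = scaleC (1/2) (x - a1 x)" for x
  have pp: "pR' a0 a1 (pR' a0 a1 x) = T' x + a0 (T' x)" for x
    unfolding pR'_def using sq_comp[OF inM(1) inM(4), of x] su shn by (simp add: T'_def)
  have nn: "nR' a0 a1 (nR' a0 a1 x) = T x - a0 (T x)" for x
    unfolding nR'_def using sq_comp[OF inM(2) inM(3), of x] sv shp by (simp add: T_def)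
  have d: "T x - T' x = a1 x" and s: "T x + T' x = x" for x
    unfolding T_def T'_def by (rule vL5, rule vL6)
  have e1: "op_diff (pR' a0 a1 \<circ> pR' a0 a1) (nR' a0 a1 \<circ> nR' a0 a1) = op_diff a0 a1"
  proof -
    have "T' x + a0 (T' x) - (T x - a0 (T x)) = (a0 (T x) + a0 (T' x)) - (T x - T' x)" for x
      by (simp add: algebra_simps)
    then show ?thesis using d s by (simp add: fun_eq_iff op_diff_def pp nn lin_add[OF l0, symmetric] add.commute)
  qed
  have e2: "op_add (pR' a0 a1 \<circ> pR' a0 a1) (nR' a0 a1 \<circ> nR' a0 a1) = op_diff id (a0 \<circ> a1)"
  proof -
    have "op_add (pR' a0 a1 \<circ> pR' a0 a1) (nR' a0 a1 \<circ> nR' a0 a1) x = op_diff id (a0 \<circ> a1) x" for x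
    proof -
      have "op_add (pR' a0 a1 \<circ> pR' a0 a1) (nR' a0 a1 \<circ> nR' a0 a1) x = T' x + a0 (T' x) + (T x - a0 (T x))"
        by (simp add: op_add_def pp nn)
      also have "\<dots> = (T x + T' x) - a0 (T x - T' x)" by (simp add: lin_diff[OF l0] algebra_simps)
      also have "\<dots> = op_diff id (a0 \<circ> a1) x" by (simp add: d s op_diff_def)
      finally show ?thesis .
    qed
    then show ?thesis by (simp add: fun_eq_iff)
  qed
  show ?thesis using pM nM sp sn c e1 e2 by blast
qed

end



lemma commutantD: "T \<in> commutant X \<Longrightarrow> S \<in> X \<Longrightarrow> T \<circ> S = S \<circ> T"
  by (simp add: commutant_def)

context key_ctx begin

lemma good_parties:
  assumes a: "\<forall>i\<in>set L. p i \<in> MM i \<and> n i \<in> MM i \<and> symm (p i) \<and> symm (n i) \<and> p i \<circ> n i = n i \<circ> p i \<and> MM i \<subseteq> J"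
    and c: "\<forall>i\<in>set L. \<forall>j\<in>set L. i \<noteq> j \<longrightarrow> MM i \<subseteq> commutant (MM j)"
  shows "good L"
proof -
  have A: "\<forall>i\<in>set L. p i \<in> J \<and> n i \<in> J \<and> symm (p i) \<and> symm (n i)" using a by blast
  have B: "p i \<circ> p j = p j \<circ> p i \<and> p i \<circ> n j = n j \<circ> p i \<and> n i \<circ> n j = n j \<circ> n i"
    if i: "i \<in> set L" and j: "j \<in> set L" for i j
  proof (cases "i = j")
    case True
    then show ?thesis using a i by simp
  next
    case False
    then have sub: "MM i \<subseteq> commutant (MM j)" using c i j by blast
    have pi: "p i \<in> commutant (MM j)" and ni: "n i \<in> commutant (MM j)" using sub a i by blast+
    have pj: "p j \<in> MM j" and nj: "n j \<in> MM j" using a j by blast+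
    show ?thesis using commutantD[OF pi pj] commutantD[OF pi nj] commutantD[OF ni nj] by blast
  qed
  show ?thesis unfolding good_def using A B by blast
qed

end

lemma foldr_filter_id:
  assumes "\<forall>i\<in>set L. i \<notin> R \<longrightarrow> g i = id"
  shows "foldr (\<circ>) (map g L) id = foldr (\<circ>) (map g (filter (\<lambda>i. i \<in> R) L)) id"
  using assms by (induction L) auto

lemma sorted_R:
  assumes "R \<subseteq> {1..m}"
  shows "sorted_list_of_set R = filter (\<lambda>i. i \<in> R) [1..<Suc m]"
proof -
  have fin: "finite R" using assms finite_subset by blast
  have s: "sorted (filter (\<lambda>i. i \<in> R) [1..<Suc m])" by (rule sorted_wrt_filter) (rule sorted_upt)
  have d: "distinct (filter (\<lambda>i. i \<in> R) [1..<Suc m])" by simp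
  have e: "set (sorted_list_of_set R) = set (filter (\<lambda>i. i \<in> R) [1..<Suc m])" using assms fin by auto
  show ?thesis
    by (rule sorted_distinct_set_unique[OF _ _ s d e]) (use fin in auto)
qed

lemma sorted_1m: "sorted_list_of_set {1..m} = [1..<Suc m]"
proof -
  have "{1..m} = {1..<Suc m}" by auto
  then show ?thesis by simp
qed

lemma Re_prod_real:
  assumes "\<forall>k\<in>R. Im (f k) = 0"
  shows "(\<Prod>k\<in>R. f k) = complex_of_real (\<Prod>k\<in>R. Re (f k))"
proof -
  have "(\<Prod>k\<in>R. f k) = (\<Prod>k\<in>R. complex_of_real (Re (f k)))"
    by (rule prod.cong) (use assms in \<open>auto simp: complex_eq_iff\<close>)
  then show ?thesis by simp
qed

lemma final_ineq:
  fixes \<alpha> \<beta> :: "nat \<Rightarrow> real" and x y :: real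
  assumes fin: "finite R" and card: "card R = h" and h: "h \<ge> 1"
    and ab: "\<forall>k\<in>R. \<alpha> k \<ge> 0 \<and> \<beta> k \<ge> 0 \<and> \<alpha> k + \<beta> k = 2"
    and x: "0 \<le> x" "x \<le> (\<Prod>k\<in>R. \<alpha> k)" and y: "0 \<le> y" "y \<le> (\<Prod>k\<in>R. \<beta> k)"
  shows "x powr (1 / real h) + y powr (1 / real h) \<le> 2"
proof -
  have ne: "R \<noteq> {}" using card h by auto
  have "x powr (1 / real h) \<le> (\<Prod>k\<in>R. \<alpha> k) powr (1 / real h)"
    by (rule powr_mono2) (use x h in auto)
  also have "\<dots> \<le> (\<Sum>k\<in>R. \<alpha> k / card R)"
    using arith_geom_mean[OF fin ne, of \<alpha>] ab card by auto
  finally have 1: "x powr (1 / real h) \<le> (\<Sum>k\<in>R. \<alpha> k / card R)" .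
  have "y powr (1 / real h) \<le> (\<Prod>k\<in>R. \<beta> k) powr (1 / real h)"
    by (rule powr_mono2) (use y h in auto)
  also have "\<dots> \<le> (\<Sum>k\<in>R. \<beta> k / card R)"
    using arith_geom_mean[OF fin ne, of \<beta>] ab card by auto
  finally have 2: "y powr (1 / real h) \<le> (\<Sum>k\<in>R. \<beta> k / card R)" .
  have "(\<Sum>k\<in>R. \<alpha> k / card R) + (\<Sum>k\<in>R. \<beta> k / card R) = (\<Sum>k\<in>R. (\<alpha> k + \<beta> k) / card R)"
    by (simp add: sum.distrib add_divide_distrib)
  also have "\<dots> = (\<Sum>k\<in>R. 2 / card R)" using ab by (intro sum.cong) auto
  also have "\<dots> = 2" using ne fin card h by simp
  finally show ?thesis using 1 2 by linarith
qed

theorem theorem3p2: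
  fixes n m h :: nat
    and src :: "nat \<Rightarrow> nat set"
    and M :: "nat \<Rightarrow> ('h::complex_hilbert_space \<Rightarrow> 'h) set"
    and \<tau> :: "('h \<Rightarrow> 'h) \<Rightarrow> complex"
    and R :: "nat set"
    and A0 A1 :: "nat \<Rightarrow> 'h \<Rightarrow> 'h"
  assumes "network n m src"
    and "MCvNA_model n m src M \<tau>"
    and "2 \<le> h" and "h \<le> h_max n m src"
    and "R \<in> Gamma n m src h"
    and "\<forall>r\<in>R. abelian (M r)"
    and "\<forall>i\<in>{1..m}. observable (M i) (A0 i) \<and> observable (M i) (A1 i)"
  shows "cmod (I_tau m \<tau> R A0 A1) powr (1 / real h)
           + cmod (J_tau m \<tau> R A0 A1) powr (1 / real h) \<le> 2"
proof -
  note model = assms(2)[unfolded MCvNA_model_def]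
  have vn: "\<And>i. i \<in> {1..m} \<Longrightarrow> von_neumann_algebra (M i)" using model by blast
  have cmM: "\<And>i j. i \<in> {1..m} \<Longrightarrow> j \<in> {1..m} \<Longrightarrow> i \<noteq> j \<Longrightarrow> M i \<subseteq> commutant (M j)" using model by blast
  have st: "is_state (join_vNA m M) \<tau>" using model by blast
  have fac0: "\<forall>R\<in>Gamma n m src h. \<forall>A. (\<forall>k\<in>R. A k \<in> M k) \<longrightarrow> \<tau> (oprod R A) = (\<Prod>k\<in>R. \<tau> (A k))"
    using model assms(3,4) by blast
  have fac: "\<And>A. (\<forall>k\<in>R. A k \<in> M k) \<Longrightarrow> \<tau> (oprod R A) = (\<Prod>k\<in>R. \<tau> (A k))"
    using fac0 assms(5) by blast
  have Rsub: "R \<subseteq> {1..m}" and cardR: "card R = h" using assms(5) by (auto simp: Gamma_def)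
  have finR: "finite R" using Rsub finite_subset by blast
  define Q where "Q = commutant (\<Union>i\<in>{1..m}. M i)"
  define J where "J = join_vNA m M"
  have JQ: "J = commutant Q" by (simp add: J_def Q_def join_vNA_def)
  have QB: "Q \<subseteq> BH" by (simp add: Q_def commutant_BH)
  have stJ: "is_state J \<tau>" using st by (simp add: J_def)
  have MJ: "M i \<subseteq> J" if i: "i \<in> {1..m}" for i
  proof -
    have "M i \<subseteq> (\<Union>i\<in>{1..m}. M i)" using i by blast
    then have "commutant (commutant (M i)) \<subseteq> J"
      unfolding JQ Q_def by (intro commutant_antimono)
    then show ?thesis using vn_eq[OF vn[OF i]] by simp
  qed
  have obs: "A0 i \<in> M i \<and> A1 i \<in> M i \<and> symm (A0 i) \<and> symm (A1 i) \<and>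
      (\<forall>x. cnorm (A0 i x) \<le> cnorm x) \<and> (\<forall>x. cnorm (A1 i x) \<le> cnorm x)" if i: "i \<in> {1..m}" for i
  proof -
    have o: "observable (M i) (A0 i)" "observable (M i) (A1 i)" using assms(7) i by auto
    have B: "M i \<subseteq> BH" by (rule vn_BH[OF vn[OF i]])
    show ?thesis using observable_symm_contr[OF o(1) B] observable_symm_contr[OF o(2) B] o
      by (auto simp: observable_def)
  qed
  have prt: "party (M i) (A0 i) (A1 i)" if i: "i \<in> {1..m}" for i
    using obs[OF i] vn[OF i] by unfold_locales auto
  have prt': "party (M i) (A1 i) (A0 i)" if i: "i \<in> {1..m}" for i
    using obs[OF i] vn[OF i] by unfold_locales auto
  have aprt: "apart (M i) (A0 i) (A1 i)" if i: "i \<in> R" for i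
  proof -
    have "i \<in> {1..m}" using i Rsub by blast
    then show ?thesis using prt assms(6) i by (simp add: apart_def apart_axioms_def)
  qed
  define pI where "pI i = (if i \<in> R then pR (A0 i) (A1 i) else pX (A0 i))" for i
  define nI where "nI i = (if i \<in> R then nR (A0 i) (A1 i) else nX (A0 i))" for i
  define pJ where "pJ i = (if i \<in> R then pR' (A0 i) (A1 i) else pX (A1 i))" for i
  define nJ where "nJ i = (if i \<in> R then nR' (A0 i) (A1 i) else nX (A1 i))" for i
  define gI where "gI i = (if i \<in> R then op_add id (A0 i \<circ> A1 i) else id)" for i
  define gJ where "gJ i = (if i \<in> R then op_diff id (A0 i \<circ> A1 i) else id)" for i
  define fI where "fI i = (if i \<in> R then op_add (A0 i) (A1 i) else A0 i)" for i
  define fJ where "fJ i = (if i \<in> R then op_diff (A0 i) (A1 i) else A1 i)" for i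
  have dI: "pI i \<in> M i \<and> nI i \<in> M i \<and> symm (pI i) \<and> symm (nI i) \<and> pI i \<circ> nI i = nI i \<circ> pI i \<and>
      op_diff (pI i \<circ> pI i) (nI i \<circ> nI i) = fI i \<and> op_add (pI i \<circ> pI i) (nI i \<circ> nI i) = gI i"
    if i: "i \<in> {1..m}" for i
  proof (cases "i \<in> R")
    case True
    then show ?thesis using apart.R_party[OF aprt[OF True]] by (simp add: pI_def nI_def fI_def gI_def)
  next
    case False
    then show ?thesis using party.X_party[OF prt[OF i]] by (simp add: pI_def nI_def fI_def gI_def)
  qed
  have dJ: "pJ i \<in> M i \<and> nJ i \<in> M i \<and> symm (pJ i) \<and> symm (nJ i) \<and> pJ i \<circ> nJ i = nJ i \<circ> pJ i \<and>
      op_diff (pJ i \<circ> pJ i) (nJ i \<circ> nJ i) = fJ i \<and> op_add (pJ i \<circ> pJ i) (nJ i \<circ> nJ i) = gJ i"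
    if i: "i \<in> {1..m}" for i
  proof (cases "i \<in> R")
    case True
    then show ?thesis using apart.R_party'[OF aprt[OF True]] by (simp add: pJ_def nJ_def fJ_def gJ_def)
  next
    case False
    then show ?thesis using party.X_party[OF prt'[OF i]] by (simp add: pJ_def nJ_def fJ_def gJ_def)
  qed
  define L where "L = [1..<Suc m]"
  have setL: "set L = {1..m}" by (auto simp: L_def)
  have cross: "\<forall>i\<in>set L'. \<forall>j\<in>set L'. i \<noteq> j \<longrightarrow> M i \<subseteq> commutant (M j)" if "set L' \<subseteq> {1..m}" for L'
    using cmM that by blast
  interpret kI: key_ctx J Q \<tau> pI nI by unfold_locales (use stJ JQ QB in auto)
  interpret kJ: key_ctx J Q \<tau> pJ nJ by unfold_locales (use stJ JQ QB in auto)
  have goodI: "kI.good L'" if "set L' \<subseteq> {1..m}" for L'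
    by (rule kI.good_parties[where MM=M]) (use that dI MJ cross[OF that] in blast)+
  have goodJ: "kJ.good L'" if "set L' \<subseteq> {1..m}" for L'
    by (rule kJ.good_parties[where MM=M]) (use that dJ MJ cross[OF that] in blast)+
  have idJ: "id \<in> J" by (rule kI.J_id)
  have keyI: "cmod (\<tau> (Fp pI nI L')) \<le> Re (\<tau> (Fs pI nI L')) \<and> Im (\<tau> (Fs pI nI L')) = 0"
    if "set L' \<subseteq> {1..m}" for L'
    using kI.key[OF goodI[OF that] idJ symm_id] by simp
  have keyJ: "cmod (\<tau> (Fp pJ nJ L')) \<le> Re (\<tau> (Fs pJ nJ L')) \<and> Im (\<tau> (Fs pJ nJ L')) = 0"
    if "set L' \<subseteq> {1..m}" for L'
    using kJ.key[OF goodJ[OF that] idJ symm_id] by simp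
  have FpI: "Fp pI nI L = oprod {1..m} fI"
    unfolding Fp_def oprod_def sorted_1m L_def[symmetric]
    by (rule arg_cong[where f="\<lambda>l. foldr (\<circ>) l id"], rule map_cong) (use dI setL in auto)
  have FpJ: "Fp pJ nJ L = oprod {1..m} fJ"
    unfolding Fp_def oprod_def sorted_1m L_def[symmetric]
    by (rule arg_cong[where f="\<lambda>l. foldr (\<circ>) l id"], rule map_cong) (use dJ setL in auto)
  have FsI: "Fs pI nI L = oprod R gI"
  proof -
    have "Fs pI nI L = foldr (\<circ>) (map gI L) id"
      unfolding Fs_def
      by (rule arg_cong[where f="\<lambda>l. foldr (\<circ>) l id"], rule map_cong) (use dI setL in auto)
    also have "\<dots> = foldr (\<circ>) (map gI (filter (\<lambda>i. i \<in> R) L)) id"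
      by (rule foldr_filter_id) (simp add: gI_def)
    also have "\<dots> = oprod R gI" by (simp add: oprod_def sorted_R[OF Rsub] L_def)
    finally show ?thesis .
  qed
  have FsJ: "Fs pJ nJ L = oprod R gJ"
  proof -
    have "Fs pJ nJ L = foldr (\<circ>) (map gJ L) id"
      unfolding Fs_def
      by (rule arg_cong[where f="\<lambda>l. foldr (\<circ>) l id"], rule map_cong) (use dJ setL in auto)
    also have "\<dots> = foldr (\<circ>) (map gJ (filter (\<lambda>i. i \<in> R) L)) id"
      by (rule foldr_filter_id) (simp add: gJ_def)
    also have "\<dots> = oprod R gJ" by (simp add: oprod_def sorted_R[OF Rsub] L_def)
    finally show ?thesis .
  qed
  have gIM: "gI k \<in> M k" and gJM: "gJ k \<in> M k" if k: "k \<in> R" for k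
  proof -
    have ki: "k \<in> {1..m}" using k Rsub by blast
    have "A0 k \<circ> A1 k \<in> M k" using obs[OF ki] vn_comp[OF vn[OF ki]] by blast
    then show "gI k \<in> M k" "gJ k \<in> M k"
      using k vn_add[OF vn[OF ki]] vn_diff[OF vn[OF ki]] vn_id[OF vn[OF ki]] by (auto simp: gI_def gJ_def)
  qed
  have realI: "Im (\<tau> (gI k)) = 0 \<and> 0 \<le> Re (\<tau> (gI k))" if k: "k \<in> R" for k
  proof -
    have ki: "set [k] \<subseteq> {1..m}" using k Rsub by auto
    have "Fs pI nI [k] = gI k" using dI[of k] ki by simp
    then show ?thesis using keyI[OF ki] norm_ge_zero by (metis order_trans)
  qed
  have realJ: "Im (\<tau> (gJ k)) = 0 \<and> 0 \<le> Re (\<tau> (gJ k))" if k: "k \<in> R" for k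
  proof -
    have ki: "set [k] \<subseteq> {1..m}" using k Rsub by auto
    have "Fs pJ nJ [k] = gJ k" using dJ[of k] ki by simp
    then show ?thesis using keyJ[OF ki] norm_ge_zero by (metis order_trans)
  qed
  have sum2: "Re (\<tau> (gI k)) + Re (\<tau> (gJ k)) = 2" if k: "k \<in> R" for k
  proof -
    have ki: "k \<in> {1..m}" using k Rsub by blast
    have XJ: "A0 k \<circ> A1 k \<in> J" using obs[OF ki] vn_comp[OF vn[OF ki]] MJ[OF ki] by blast
    have "\<tau> (gI k) = \<tau> id + \<tau> (A0 k \<circ> A1 k)" using k state_add[OF stJ idJ XJ] by (simp add: gI_def)
    moreover have "\<tau> (gJ k) = \<tau> id - \<tau> (A0 k \<circ> A1 k)" using k state_diff[OF stJ JQ QB idJ XJ] by (simp add: gJ_def)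
    moreover have "\<tau> id = 1" using stJ by (simp add: is_state_def)
    ultimately show ?thesis by simp
  qed
  have prodI: "\<tau> (oprod R gI) = complex_of_real (\<Prod>k\<in>R. Re (\<tau> (gI k)))"
    using fac[of gI] gIM Re_prod_real[of R "\<lambda>k. \<tau> (gI k)"] realI by auto
  have prodJ: "\<tau> (oprod R gJ) = complex_of_real (\<Prod>k\<in>R. Re (\<tau> (gJ k)))"
    using fac[of gJ] gJM Re_prod_real[of R "\<lambda>k. \<tau> (gJ k)"] realJ by auto
  have LL: "set L \<subseteq> {1..m}" using setL by simp
  have bI: "cmod (I_tau m \<tau> R A0 A1) \<le> (\<Prod>k\<in>R. Re (\<tau> (gI k)))"
    using keyI[OF LL] unfolding FpI FsI prodI I_tau_def fI_def Re_complex_of_real by (rule conjunct1)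
  have bJ: "cmod (J_tau m \<tau> R A0 A1) \<le> (\<Prod>k\<in>R. Re (\<tau> (gJ k)))"
    using keyJ[OF LL] unfolding FpJ FsJ prodJ J_tau_def fJ_def Re_complex_of_real by (rule conjunct1)
  show ?thesis
    by (rule final_ineq[OF finR cardR _ _ _ bI _ bJ]) (use assms(3) realI realJ sum2 in auto)
qed


end
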